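(* Let $\varepsilon>0$ and $\zeta\in(0,1/2]$. There exists an $\varepsilon$-DP (event-level) continual mechanism for the data structure version of incremental monotone symmetric norm estimation on $n$ elements and streams of length $T$ with multiplicative error $1+\zeta$ and additive error $\tilde O\big(\frac{\log^6(nT)}{\varepsilon^2\zeta^5}\big)\cdot L(e_1)$: with probability at least $2/3$, simultaneously for all time steps $t$ and all monotone symmetric norms $L$ on $\mathbb R^n$, the answer $\mathfrak d^t(L)$ satisfies $(1+\zeta)^{-1}L(f^t)-\alpha L(e_1)\le\mathfrak d^t(L)\le(1+\zeta)L(f^t)+\alpha L(e_1)$ with $\alpha=\tilde O(\log^6(nT)/(\varepsilon^2\zeta^5))$.
   Context: Incremental streams over universe $[n]\cup\{\bot\}$: each update inserts one element of $[n]$ or is the empty element $\bot$; $f^t\in\mathbb N^n$ is the frequency vector after $t$ updates. A norm $L$ on $\mathbb R^n$ is monotone if $|f_i|\le|f'_i|$ for all $i$ implies $L(f)\le L(f')$, and symmetric if $L$ is invariant under permuting coordinates; $e_1=(1,0,\dots,0)$. Data structure version of monotone symmetric norm estimation: at each time $t$ the mechanism maintains a data structure $\mathfrak d^t$ which, queried with any monotone symmetric norm $L$, returns an estimate $\mathfrak d^t(L)$ of $L(f^t)$. Privacy is with respect to the entire released data structures (all possible query answers) over all time steps. Two streams are event-level neighboring if they differ in at most one time step; $\varepsilon$-DP means $\Pr[\mathcal A(u)\in S]\le e^\varepsilon\Pr[\mathcal A(v)\in S]$ for all neighbors and output sets $S$. $\tilde O$ hides lower-order polylogarithmic factors (e.g.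 in $\log(nT)$, $1/\varepsilon$, $1/\zeta$). *)

theory Defs
  imports "HOL-Probability.Probability"
begin

text \<open>Vectors of R^n are represented as functions nat => real vanishing outside {0..<n};
  coordinate i (0-based) corresponds to universe element i+1 of [n].\<close>
definition rvec :: "nat \<Rightarrow> (nat \<Rightarrow> real) set" where
  "rvec n = {v. \<forall>i\<ge>n. v i = 0}"

definition is_norm_on :: "nat \<Rightarrow> ((nat \<Rightarrow> real) \<Rightarrow> real) \<Rightarrow> bool" where
  "is_norm_on n L \<longleftrightarrow>
     (\<forall>v\<in>rvec n. L v = 0 \<longleftrightarrow> v = (\<lambda>_. 0)) \<and>
     (\<forall>v\<in>rvec n. \<forall>c::real. L (\<lambda>i. c * v i) = \<bar>c\<bar> * L v) \<and>
     (\<forall>v\<in>rvec n. \<forall>w\<in>rvec n. L (\<lambda>i. v i + w i) \<le> L v + L w)"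

definition monotone_norm_on :: "nat \<Rightarrow> ((nat \<Rightarrow> real) \<Rightarrow> real) \<Rightarrow> bool" where
  "monotone_norm_on n L \<longleftrightarrow>
     (\<forall>v\<in>rvec n. \<forall>w\<in>rvec n. (\<forall>i<n. \<bar>v i\<bar> \<le> \<bar>w i\<bar>) \<longrightarrow> L v \<le> L w)"

definition symmetric_norm_on :: "nat \<Rightarrow> ((nat \<Rightarrow> real) \<Rightarrow> real) \<Rightarrow> bool" where
  "symmetric_norm_on n L \<longleftrightarrow>
     (\<forall>v\<in>rvec n. \<forall>\<sigma>. \<sigma> permutes {..<n} \<longrightarrow> L (v \<circ> \<sigma>) = L v)"

definition mon_sym_norm :: "nat \<Rightarrow> ((nat \<Rightarrow> real) \<Rightarrow> real) \<Rightarrow> bool" where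
  "mon_sym_norm n L \<longleftrightarrow> is_norm_on n L \<and> monotone_norm_on n L \<and> symmetric_norm_on n L"

definition e1 :: "nat \<Rightarrow> real" where
  "e1 = (\<lambda>i. if i = 0 then 1 else 0)"

text \<open>Streams: lists of updates; Some i inserts element i (i < n), None is the empty element.\<close>
definition valid_stream :: "nat \<Rightarrow> nat \<Rightarrow> nat option list \<Rightarrow> bool" where
  "valid_stream n T xs \<longleftrightarrow> length xs = T \<and> (\<forall>x\<in>set xs. x = None \<or> (\<exists>i<n. x = Some i))"

definition freq :: "nat option list \<Rightarrow> nat \<Rightarrow> nat \<Rightarrow> real" where
  "freq xs t i = real (card {j. j < t \<and> j < length xs \<and> xs ! j = Some i})"

definition neighboring :: "nat option list \<Rightarrow> nat option list \<Rightarrow> bool" where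
  "neighboring xs ys \<longleftrightarrow> length xs = length ys \<and>
     card {j. j < length xs \<and> xs ! j \<noteq> ys ! j} \<le> 1"

text \<open>A released data structure answers every query L (a function on vectors).
  The output of a mechanism on a stream is the sequence of data structures, indexed by time.\<close>
type_synonym dstruct = "((nat \<Rightarrow> real) \<Rightarrow> real) \<Rightarrow> real"
type_synonym mechanism = "nat option list \<Rightarrow> (nat \<Rightarrow> dstruct) pmf"

definition prefix_output :: "nat \<Rightarrow> (nat \<Rightarrow> dstruct) \<Rightarrow> (nat \<Rightarrow> dstruct)" where
  "prefix_output t out = (\<lambda>s. if s \<le> t then out s else (\<lambda>_. 0))"

definition continual :: "nat \<Rightarrow> nat \<Rightarrow> mechanism \<Rightarrow> bool" where
  "continual n T M \<longleftrightarrow> (\<forall>xs ys t. valid_stream n T xs \<and> valid_stream n T ys \<and>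
      take t xs = take t ys \<longrightarrow>
      map_pmf (prefix_output t) (M xs) = map_pmf (prefix_output t) (M ys))"

definition event_level_dp :: "nat \<Rightarrow> nat \<Rightarrow> real \<Rightarrow> mechanism \<Rightarrow> bool" where
  "event_level_dp n T \<epsilon> M \<longleftrightarrow> (\<forall>xs ys S. valid_stream n T xs \<and> valid_stream n T ys \<and>
      neighboring xs ys \<longrightarrow>
      measure_pmf.prob (M xs) S \<le> exp \<epsilon> * measure_pmf.prob (M ys) S)"

definition accurate_output :: "nat \<Rightarrow> nat \<Rightarrow> real \<Rightarrow> real \<Rightarrow> nat option list \<Rightarrow> (nat \<Rightarrow> dstruct) \<Rightarrow> bool" where
  "accurate_output n T \<zeta> \<alpha> xs out \<longleftrightarrow>
     (\<forall>t\<in>{1..T}. \<forall>L. mon_sym_norm n L \<longrightarrow>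
        L (freq xs t) / (1 + \<zeta>) - \<alpha> * L e1 \<le> out t L \<and>
        out t L \<le> (1 + \<zeta>) * L (freq xs t) + \<alpha> * L e1)"

end

theory Submission
  imports Defs
begin


lemma norm_zero:
  assumes "is_norm_on n L" shows "L (\<lambda>_. 0) = 0"
proof -
  have "(\<lambda>_. 0::real) \<in> rvec n" by (simp add: rvec_def)
  then show ?thesis using assms unfolding is_norm_on_def by blast
qed

lemma rvec_scale: "v \<in> rvec n \<Longrightarrow> (\<lambda>i. c * v i) \<in> rvec n"
  by (simp add: rvec_def)
lemma rvec_add: "v \<in> rvec n \<Longrightarrow> w \<in> rvec n \<Longrightarrow> (\<lambda>i. v i + w i) \<in> rvec n"
  by (simp add: rvec_def)

lemma norm_scale:
  assumes "is_norm_on n L" "v \<in> rvec n" shows "L (\<lambda>i. c * v i) = \<bar>c\<bar> * L v"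
  using assms unfolding is_norm_on_def by blast

lemma norm_tri:
  assumes "is_norm_on n L" "v \<in> rvec n" "w \<in> rvec n" shows "L (\<lambda>i. v i + w i) \<le> L v + L w"
  using assms unfolding is_norm_on_def by blast

lemma norm_nonneg:
  assumes "is_norm_on n L" "v \<in> rvec n" shows "0 \<le> L v"
proof -
  have "L (\<lambda>i. v i + (-1) * v i) \<le> L v + L (\<lambda>i. (-1) * v i)"
    using norm_tri[OF assms(1) assms(2) rvec_scale[OF assms(2)]] .
  moreover have "L (\<lambda>i. (-1) * v i) = L v" using norm_scale[OF assms, of "-1"] by simp
  moreover have "(\<lambda>i. v i + (-1) * v i) = (\<lambda>_. 0)" by auto
  ultimately show ?thesis using norm_zero[OF assms(1)] by simp
qed

lemma perm_rvec: "v \<in> rvec n \<Longrightarrow> \<sigma> permutes {..<n} \<Longrightarrow> v \<circ> \<sigma> \<in> rvec n"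
  unfolding rvec_def by (auto simp: permutes_def)

lemma mono_nonneg:
  assumes "mon_sym_norm n L" "v \<in> rvec n" "w \<in> rvec n" "\<forall>i<n. 0 \<le> v i" "\<forall>i<n. v i \<le> w i"
  shows "L v \<le> L w"
proof -
  have "\<forall>i<n. \<bar>v i\<bar> \<le> \<bar>w i\<bar>" using assms(4,5) by force
  then show ?thesis using assms(1-3) unfolding mon_sym_norm_def monotone_norm_on_def by blast
qed

lemma ttransform:
  assumes N: "mon_sym_norm n L" and y: "y \<in> rvec n" and jl: "j < n" "l < n" "j \<noteq> l"
    and d: "0 \<le> d" "d \<le> y j - y l"
  shows "L (y(j := y j - d, l := y l + d)) \<le> L y"
proof (cases "y j - y l = 0")
  case True
  then have "d = 0" using d by simp
  then show ?thesis by simp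
next
  case False
  have nrm: "is_norm_on n L" and sym: "symmetric_norm_on n L" using N by (auto simp: mon_sym_norm_def)
  define lam where "lam = 1 - d / (y j - y l)"
  have pos: "y j - y l > 0" using False d by simp
  have l0: "0 \<le> lam" "lam \<le> 1" using d pos by (auto simp: lam_def field_simps)
  define z where "z = y \<circ> Transposition.transpose j l"
  have zp: "Transposition.transpose j l permutes {..<n}" using jl by (intro permutes_swap_id) auto
  have zr: "z \<in> rvec n" unfolding z_def using perm_rvec[OF y zp] .
  have Lz: "L z = L y" using sym y zp unfolding symmetric_norm_on_def z_def by blast
  have eq: "y(j := y j - d, l := y l + d) = (\<lambda>i. (\<lambda>i. lam * y i) i + (\<lambda>i. (1 - lam) * z i) i)"
  proof
    fix i
    have om: "1 - lam = d / (y j - y l)" by (simp add: lam_def)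
    have a: "lam * y j + (1 - lam) * y l = y j - (1 - lam) * (y j - y l)" by (simp add: algebra_simps)
    have b: "lam * y l + (1 - lam) * y j = y l + (1 - lam) * (y j - y l)" by (simp add: algebra_simps)
    have c: "(1 - lam) * (y j - y l) = d" using pos om by simp
    show "(y(j := y j - d, l := y l + d)) i = lam * y i + (1 - lam) * z i"
      using jl a b c by (auto simp: z_def Transposition.transpose_def algebra_simps)
  qed
  have "L (y(j := y j - d, l := y l + d)) \<le> L (\<lambda>i. lam * y i) + L (\<lambda>i. (1 - lam) * z i)"
    unfolding eq by (rule norm_tri[OF nrm rvec_scale[OF y] rvec_scale[OF zr]])
  also have "\<dots> = lam * L y + (1 - lam) * L y"
    using norm_scale[OF nrm y, of lam] norm_scale[OF nrm zr, of "1 - lam"] l0 Lz by simp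
  also have "\<dots> = L y" by (simp add: algebra_simps)
  finally show ?thesis .
qed



lemma sum_upd: fixes f :: "'a \<Rightarrow> real" shows "finite A \<Longrightarrow> sum (f(j := b)) A = sum f A + (if j \<in> A then b - f j else 0)"
proof -
  assume f: "finite A"
  show ?thesis
  proof (cases "j \<in> A")
    case True
    have e1: "sum (f(j := b)) A = (f(j:=b)) j + sum (f(j := b)) (A - {j})"
      using f True by (rule sum.remove)
    have e2: "sum (f(j := b)) (A - {j}) = sum f (A - {j})" by (intro sum.cong) auto
    have e3: "sum f A = f j + sum f (A - {j})" using f True by (rule sum.remove)
    have e4: "(f(j:=b)) j = b" by simp
    have e5: "sum (f(j := b)) A = b + sum f (A - {j})" by (subst e1, subst e2, subst e4) (rule refl)
    have "sum (f(j := b)) A = sum f A + (b - f j)" using e5 e3 by (simp add: algebra_simps)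
    then show ?thesis using True by simp
  next
    case False
    then have "sum (f(j := b)) A = sum f A" by (intro sum.cong) auto
    then show ?thesis using False by simp
  qed
qed

lemma kf_core:
  assumes N: "mon_sym_norm n L" and x: "x \<in> rvec n" "\<forall>i<n. 0 \<le> x i"
    and xs: "\<forall>i j. i \<le> j \<longrightarrow> j < n \<longrightarrow> x j \<le> x i"
  shows "y \<in> rvec n \<Longrightarrow> (\<forall>i<n. 0 \<le> y i) \<Longrightarrow> (\<forall>k\<le>n. (\<Sum>i<k. x i) \<le> (\<Sum>i<k. y i)) \<Longrightarrow> L x \<le> L y"
proof (induction "card {i. i<n \<and> x i \<noteq> y i}" arbitrary: y rule: less_induct)
  case less
  show ?case
  proof (cases "\<forall>i<n. x i \<le> y i")
    case True
    show ?thesis by (rule mono_nonneg[OF N x(1) less.prems(1) x(2) True])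
  next
    case False
    then obtain l0 where l0: "l0 < n" "y l0 < x l0" by force
    define j where "j = (LEAST i. i < n \<and> x i \<noteq> y i)"
    have jP: "j < n \<and> x j \<noteq> y j" unfolding j_def
      by (rule LeastI[of _ l0]) (use l0 in auto)
    have jmin: "\<And>i. i < n \<Longrightarrow> x i \<noteq> y i \<Longrightarrow> j \<le> i" unfolding j_def by (rule Least_le) auto
    have before: "\<And>i. i < j \<Longrightarrow> x i = y i"
    proof (rule ccontr)
      fix i assume "i < j" "x i \<noteq> y i"
      then show False using jmin[of i] jP by simp
    qed
    have "Suc j \<le> n" using jP by simp
    then have "(\<Sum>i<Suc j. x i) \<le> (\<Sum>i<Suc j. y i)" using less.prems(3) by blast
    moreover have "(\<Sum>i<j. x i) = (\<Sum>i<j. y i)" using before by (intro sum.cong) auto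
    ultimately have "x j \<le> y j" by simp
    with jP have xj: "x j < y j" by simp
    define l where "l = (LEAST i. i < n \<and> y i < x i)"
    have lP: "l < n \<and> y l < x l" unfolding l_def
      by (rule LeastI[of _ l0]) (use l0 in auto)
    have lmin: "\<And>i. i < n \<Longrightarrow> y i < x i \<Longrightarrow> l \<le> i" unfolding l_def by (rule Least_le) auto
    have jl: "j < l"
    proof (rule ccontr)
      assume "\<not> j < l"
      then have "l \<le> j" by simp
      moreover have "l \<noteq> j" using lP xj by auto
      ultimately have "l < j" by simp
      then show False using before[of l] lP by simp
    qed
    have mid: "x i \<le> y i" if "i < l" for i
    proof -
      have "i < n" using that lP by simp
      then show ?thesis using lmin[of i] that by fastforce
    qed
    define d where "d = min (y j - x j) (x l - y l)"
    have d0: "0 < d" using xj lP by (simp add: d_def)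
    have xlj: "x l \<le> x j" using xs jl lP by auto
    have "y j - x j \<le> y j - y l" using xlj lP by linarith
    then have d1: "d \<le> y j - y l" unfolding d_def by (rule min.coboundedI1)
    have dj: "d \<le> y j - x j" by (simp add: d_def)
    have xj0: "0 \<le> x j" using x(2) jP by simp
    have ya: "0 \<le> y j - d" using dj xj0 by linarith
    have "0 \<le> y l" using less.prems(2) lP by blast
    then have yb: "0 \<le> y l + d" using d0 by linarith
    define y' where "y' = y(j := y j - d, l := y l + d)"
    define y1 where "y1 = y(j := y j - d)"
    have y'y1: "y' = y1(l := y l + d)" by (simp add: y'_def y1_def)
    have y'r: "y' \<in> rvec n" using less.prems(1) jP lP unfolding rvec_def y'_def by auto
    have y'nn: "\<forall>i<n. 0 \<le> y' i"
      using less.prems(2) ya yb unfolding y'_def by auto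
    have pre: "\<forall>k\<le>n. (\<Sum>i<k. x i) \<le> (\<Sum>i<k. y' i)"
    proof (intro allI impI)
      fix k assume k: "k \<le> n"
      have sy': "(\<Sum>i<k. y' i) = (\<Sum>i<k. y i) + (if j < k then - d else 0) + (if l < k then d else 0)"
      proof -
        have s1: "sum y' {..<k} = sum y1 {..<k} + (if l \<in> {..<k} then y l + d - y1 l else 0)"
          unfolding y'y1 by (rule sum_upd) simp
        have s2: "sum y1 {..<k} = sum y {..<k} + (if j \<in> {..<k} then y j - d - y j else 0)"
          unfolding y1_def by (rule sum_upd) simp
        have s3: "y1 l = y l" using jl by (simp add: y1_def)
        show ?thesis using s1 s2 s3 by (cases "j<k"; cases "l<k") auto
      qed
      show "(\<Sum>i<k. x i) \<le> (\<Sum>i<k. y' i)"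
      proof (cases "j < k \<and> k \<le> l")
        case True
        have "(\<Sum>i<k. (if i = j then y j - x j else 0)) \<le> (\<Sum>i<k. y i - x i)"
          using mid True xj by (intro sum_mono) auto
        moreover have "(\<Sum>i<k. (if i = j then y j - x j else 0)) = y j - x j"
          using True by (simp add: sum.delta)
        ultimately have "d \<le> (\<Sum>i<k. y i) - (\<Sum>i<k. x i)"
          by (simp add: d_def sum_subtractf)
        then show ?thesis using sy' True by simp
      next
        case False
        then show ?thesis using sy' less.prems(3) k jl by auto
      qed
    qed
    have Ly': "L y' \<le> L y" unfolding y'_def
      using ttransform[OF N less.prems(1), of j l d] jP lP jl d0 d1 by simp
    have sub: "{i. i<n \<and> x i \<noteq> y' i} \<subset> {i. i<n \<and> x i \<noteq> y i}"
    proof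
      show "{i. i<n \<and> x i \<noteq> y' i} \<subseteq> {i. i<n \<and> x i \<noteq> y i}"
      proof
        fix i assume i: "i \<in> {i. i<n \<and> x i \<noteq> y' i}"
        show "i \<in> {i. i<n \<and> x i \<noteq> y i}"
        proof (cases "i = j \<or> i = l")
          case True
          then show ?thesis using jP lP i by auto
        next
          case False
          then have "y' i = y i" unfolding y'_def by simp
          then show ?thesis using i by simp
        qed
      qed
      show "{i. i<n \<and> x i \<noteq> y' i} \<noteq> {i. i<n \<and> x i \<noteq> y i}"
      proof (cases "d = y j - x j")
        case True
        then have yj: "y' j = x j" unfolding y'_def using jl by simp
        show ?thesis
        proof
          assume eq: "{i. i<n \<and> x i \<noteq> y' i} = {i. i<n \<and> x i \<noteq> y i}"
          have "j \<in> {i. i<n \<and> x i \<noteq> y i}" using jP by simp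
          then have "j \<in> {i. i<n \<and> x i \<noteq> y' i}" using eq by simp
          then show False using yj by simp
        qed
      next
        case False
        then have "d = x l - y l" unfolding d_def by (simp add: min_def split: if_splits)
        then have yl: "y' l = x l" unfolding y'_def by simp
        show ?thesis
        proof
          assume eq: "{i. i<n \<and> x i \<noteq> y' i} = {i. i<n \<and> x i \<noteq> y i}"
          have "l \<in> {i. i<n \<and> x i \<noteq> y i}" using lP by simp
          then have "l \<in> {i. i<n \<and> x i \<noteq> y' i}" using eq by simp
          then show False using yl by simp
        qed
      qed
    qed
    have "card {i. i<n \<and> x i \<noteq> y' i} < card {i. i<n \<and> x i \<noteq> y i}"
      by (rule psubset_card_mono[OF _ sub]) simp
    then have "L x \<le> L y'" by (rule less.hyps[OF _ y'r y'nn pre])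
    then show ?thesis using Ly' by simp
  qed
qed



definition ksets :: "nat \<Rightarrow> nat \<Rightarrow> nat set set" where
  "ksets n k = {A. A \<subseteq> {..<n} \<and> card A = k}"

definition topk :: "nat \<Rightarrow> nat \<Rightarrow> (nat \<Rightarrow> real) \<Rightarrow> real" where
  "topk n k v = Max ((\<lambda>A. sum v A) ` ksets n k)"

lemma finite_ksets: "finite (ksets n k)"
proof -
  have "ksets n k \<subseteq> Pow {..<n}" unfolding ksets_def by auto
  then show ?thesis by (rule finite_subset) simp
qed

lemma ksets_ne: "k \<le> n \<Longrightarrow> {..<k} \<in> ksets n k"
  unfolding ksets_def by auto

lemma topk_ge: "A \<in> ksets n k \<Longrightarrow> sum v A \<le> topk n k v"
  unfolding topk_def by (rule Max_ge) (use finite_ksets in auto)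

lemma topk_attained: "k \<le> n \<Longrightarrow> \<exists>A\<in>ksets n k. topk n k v = sum v A"
proof -
  assume "k \<le> n"
  then have ne: "(\<lambda>A. sum v A) ` ksets n k \<noteq> {}" using ksets_ne by blast
  have "topk n k v \<in> (\<lambda>A. sum v A) ` ksets n k" unfolding topk_def
    by (rule Max_in) (use finite_ksets ne in auto)
  then show ?thesis by auto
qed

lemma topk_leI: "k \<le> n \<Longrightarrow> (\<And>A. A \<in> ksets n k \<Longrightarrow> sum v A \<le> c) \<Longrightarrow> topk n k v \<le> c"
  using topk_attained by metis

lemma sort_exists:
  fixes v :: "nat \<Rightarrow> real"
  shows "\<exists>\<sigma>. \<sigma> permutes {..<n} \<and> (\<forall>i j. i \<le> j \<longrightarrow> j < n \<longrightarrow> v (\<sigma> j) \<le> v (\<sigma> i))"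
proof -
  define xs where "xs = map v [0..<n]"
  define ys where "ys = sort_key uminus xs"
  have "mset ys = mset xs" unfolding ys_def by simp
  then obtain p where p: "p permutes {..<length xs}" "permute_list p xs = ys"
    by (rule mset_eq_permutation)
  have lx: "length xs = n" unfolding xs_def by simp
  have ly: "length ys = n" unfolding ys_def using lx by simp
  have yi: "ys ! i = v (p i)" if "i < n" for i
  proof -
    have "ys ! i = permute_list p xs ! i" using p(2) by simp
    also have "\<dots> = xs ! (p i)" unfolding permute_list_def using that lx by simp
    also have "p i < n" using permutes_in_image[OF p(1)] that lx by simp
    then have "xs ! (p i) = v (p i)" unfolding xs_def by simp
    finally show ?thesis .
  qed
  have so: "sorted (map uminus ys)" unfolding ys_def by simp
  have "v (p j) \<le> v (p i)" if "i \<le> j" "j < n" for i j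
  proof -
    have "(map uminus ys) ! i \<le> (map uminus ys) ! j"
      by (rule sorted_nth_mono[OF so that(1)]) (use that ly in simp)
    then show ?thesis using that yi[of i] yi[of j] ly by simp
  qed
  then show ?thesis using p(1) lx by auto
qed

lemma sorted_prefix_max:
  fixes w :: "nat \<Rightarrow> real"
  assumes mono: "\<forall>i j. i \<le> j \<longrightarrow> j < n \<longrightarrow> w j \<le> w i" and B: "B \<subseteq> {..<n}" "card B = k"
  shows "sum w B \<le> (\<Sum>i<k. w i)"
proof (cases "k = 0")
  case True
  then have "B = {}" using B finite_subset[OF B(1)] by auto
  then show ?thesis using True by simp
next
  case False
  have fB: "finite B" using B(1) finite_subset by blast
  have kn: "k \<le> n" using card_mono[OF _ B(1)] B(2) by simp
  define P where "P = {..<k::nat}"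
  define m where "m = w (k - 1)"
  have c1: "card B = card (B \<inter> P) + card (B - P)" using fB by (rule card_Int_Diff)
  have c2: "card P = card (P \<inter> B) + card (P - B)" by (rule card_Int_Diff) (simp add: P_def)
  have cP: "card P = k" by (simp add: P_def)
  have ceq: "card (B - P) = card (P - B)" using c1 c2 cP B(2) by (simp add: Int_commute)
  have s1: "sum w (B - P) \<le> of_nat (card (B - P)) * m"
  proof (rule sum_bounded_above)
    fix i assume "i \<in> B - P"
    then have "k - 1 \<le> i" "i < n" using B(1) by (auto simp: P_def)
    then show "w i \<le> m" unfolding m_def using mono by blast
  qed
  have s2: "of_nat (card (P - B)) * m \<le> sum w (P - B)"
  proof (rule sum_bounded_below)
    fix i assume "i \<in> P - B"
    then have "i \<le> k - 1" "k - 1 < n" using kn False by (auto simp: P_def)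
    then show "m \<le> w i" unfolding m_def using mono by blast
  qed
  have "sum w B = sum w (B \<inter> P) + sum w (B - P)" using fB by (rule sum.Int_Diff)
  also have "\<dots> \<le> sum w (B \<inter> P) + sum w (P - B)" using s1 s2 ceq by simp
  also have "sum w (B \<inter> P) + sum w (P - B) = sum w P"
    using sum.Int_Diff[of P w B] by (simp add: P_def Int_commute)
  finally show ?thesis by (simp add: P_def)
qed

lemma kf:
  assumes N: "mon_sym_norm n L" and x: "x \<in> rvec n" "\<forall>i<n. 0 \<le> x i"
    and y: "y \<in> rvec n" "\<forall>i<n. 0 \<le> y i"
    and dom: "\<And>k. 1 \<le> k \<Longrightarrow> k \<le> n \<Longrightarrow> topk n k x \<le> topk n k y"
  shows "L x \<le> L y"
proof -
  have sym: "symmetric_norm_on n L" using N by (simp add: mon_sym_norm_def)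
  obtain \<sigma> where s: "\<sigma> permutes {..<n}" "\<forall>i j. i \<le> j \<longrightarrow> j < n \<longrightarrow> x (\<sigma> j) \<le> x (\<sigma> i)"
    using sort_exists by blast
  obtain \<tau> where t: "\<tau> permutes {..<n}" "\<forall>i j. i \<le> j \<longrightarrow> j < n \<longrightarrow> y (\<tau> j) \<le> y (\<tau> i)"
    using sort_exists by blast
  have Lx: "L (x \<circ> \<sigma>) = L x" using sym x(1) s(1) unfolding symmetric_norm_on_def by blast
  have Ly: "L (y \<circ> \<tau>) = L y" using sym y(1) t(1) unfolding symmetric_norm_on_def by blast
  have xr: "x \<circ> \<sigma> \<in> rvec n" by (rule perm_rvec[OF x(1) s(1)])
  have yr: "y \<circ> \<tau> \<in> rvec n" by (rule perm_rvec[OF y(1) t(1)])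
  have xnn: "\<forall>i<n. 0 \<le> (x \<circ> \<sigma>) i" using x(2) permutes_in_image[OF s(1)] by simp
  have ynn: "\<forall>i<n. 0 \<le> (y \<circ> \<tau>) i" using y(2) permutes_in_image[OF t(1)] by simp
  have xso: "\<forall>i j. i \<le> j \<longrightarrow> j < n \<longrightarrow> (x \<circ> \<sigma>) j \<le> (x \<circ> \<sigma>) i" using s(2) by simp
  have pre: "\<forall>k\<le>n. (\<Sum>i<k. (x \<circ> \<sigma>) i) \<le> (\<Sum>i<k. (y \<circ> \<tau>) i)"
  proof (intro allI impI)
    fix k assume kn: "k \<le> n"
    show "(\<Sum>i<k. (x \<circ> \<sigma>) i) \<le> (\<Sum>i<k. (y \<circ> \<tau>) i)"
    proof (cases "k = 0")
      case True then show ?thesis by simp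
    next
      case False
      obtain A where A: "A \<in> ksets n k" "topk n k y = sum y A" using topk_attained[OF kn] by blast
      have "(\<Sum>i<k. (x \<circ> \<sigma>) i) = sum x (\<sigma> ` {..<k})"
        by (rule sum.reindex[OF permutes_inj_on[OF s(1)], symmetric])
      also have "\<dots> \<le> topk n k x"
      proof (rule topk_ge)
        have "\<sigma> ` {..<k} \<subseteq> \<sigma> ` {..<n}" using kn by (intro image_mono) simp
        then have "\<sigma> ` {..<k} \<subseteq> {..<n}" using permutes_image[OF s(1)] by simp
        moreover have "card (\<sigma> ` {..<k}) = k"
          using card_image[OF permutes_inj_on[OF s(1)]] by simp
        ultimately show "\<sigma> ` {..<k} \<in> ksets n k" unfolding ksets_def by simp
      qed
      also have "\<dots> \<le> topk n k y" using dom[of k] kn False by simp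
      also have "topk n k y = sum y A" using A by simp
      also have "sum y A = sum (y \<circ> \<tau>) (inv \<tau> ` A)"
      proof -
        have "\<tau> ` (inv \<tau> ` A) = A" using permutes_inv_o(1)[OF t(1)] by (simp add: image_comp)
        moreover have "inj_on \<tau> (inv \<tau> ` A)" using permutes_inj_on[OF t(1)] .
        ultimately show ?thesis using sum.reindex[of \<tau> "inv \<tau> ` A" y] by simp
      qed
      also have "\<dots> \<le> (\<Sum>i<k. (y \<circ> \<tau>) i)"
      proof (rule sorted_prefix_max)
        show "\<forall>i j. i \<le> j \<longrightarrow> j < n \<longrightarrow> (y \<circ> \<tau>) j \<le> (y \<circ> \<tau>) i" using t(2) by simp
        have pi: "inv \<tau> permutes {..<n}" using permutes_inv[OF t(1)] .
        show "inv \<tau> ` A \<subseteq> {..<n}" using A(1) permutes_in_image[OF pi] unfolding ksets_def by auto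
        show "card (inv \<tau> ` A) = k"
          using card_image[OF permutes_inj_on[OF pi]] A(1) unfolding ksets_def by simp
      qed
      finally show ?thesis .
    qed
  qed
  have "L (x \<circ> \<sigma>) \<le> L (y \<circ> \<tau>)" by (rule kf_core[OF N xr xnn xso yr ynn pre])
  then show ?thesis using Lx Ly by simp
qed



lemma topk_nonneg: "k \<le> n \<Longrightarrow> \<forall>i<n. 0 \<le> v i \<Longrightarrow> 0 \<le> topk n k v"
proof -
  assume k: "k \<le> n" and nn: "\<forall>i<n. 0 \<le> v i"
  have "0 \<le> sum v {..<k}" using nn k by (intro sum_nonneg) auto
  also have "\<dots> \<le> topk n k v" by (rule topk_ge[OF ksets_ne[OF k]])
  finally show ?thesis .
qed

lemma topk_step: assumes "Suc k \<le> n" "\<forall>i<n. 0 \<le> v i" shows "topk n k v \<le> topk n (Suc k) v"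
proof -
  obtain A where A: "A \<in> ksets n k" "topk n k v = sum v A" using topk_attained[of k n v] assms(1) by auto
  have fA: "finite A" using A(1) unfolding ksets_def using finite_subset by blast
  have "A \<noteq> {..<n}" using A(1) assms(1) unfolding ksets_def by auto
  then obtain i where i: "i < n" "i \<notin> A" using A(1) unfolding ksets_def by blast
  have B: "insert i A \<in> ksets n (Suc k)" using A(1) i fA unfolding ksets_def by auto
  have "topk n k v = sum v A" by (rule A(2))
  also have "\<dots> \<le> sum v (insert i A)" using fA i assms(2) by simp
  also have "\<dots> \<le> topk n (Suc k) v" by (rule topk_ge[OF B])
  finally show ?thesis .
qed

lemma topk_mono_k: assumes "k \<le> k'" "k' \<le> n" "\<forall>i<n. 0 \<le> v i" shows "topk n k v \<le> topk n k' v"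
  using assms
proof (induction k' rule: dec_induct)
  case base then show ?case by simp
next
  case (step m)
  then show ?case using topk_step[of m n v] by simp
qed

lemma topk_ratio_step:
  assumes "1 \<le> k" "Suc k \<le> n"
  shows "topk n (Suc k) v / real (Suc k) \<le> topk n k v / real k"
proof -
  obtain A where A: "A \<in> ksets n (Suc k)" "topk n (Suc k) v = sum v A"
    using topk_attained[of "Suc k" n v] assms(2) by auto
  have fA: "finite A" and cA: "card A = Suc k" and sA: "A \<subseteq> {..<n}"
    using A(1) unfolding ksets_def using finite_subset by auto
  have each: "sum v (A - {j}) \<le> topk n k v" if "j \<in> A" for j
  proof (rule topk_ge)
    show "A - {j} \<in> ksets n k" using that fA cA sA unfolding ksets_def by auto
  qed
  have "(\<Sum>j\<in>A. sum v (A - {j})) = (\<Sum>j\<in>A. sum v A - v j)"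
    using fA by (intro sum.cong) (auto simp: sum_diff1)
  also have "\<dots> = real (Suc k) * sum v A - sum v A" using cA by (simp add: sum_subtractf)
  also have "\<dots> = real k * sum v A" by (simp add: algebra_simps)
  finally have eq: "(\<Sum>j\<in>A. sum v (A - {j})) = real k * sum v A" .
  have "(\<Sum>j\<in>A. sum v (A - {j})) \<le> (\<Sum>j\<in>A. topk n k v)" using each by (intro sum_mono) auto
  also have "\<dots> = real (Suc k) * topk n k v" using cA by simp
  finally have "real k * topk n (Suc k) v \<le> real (Suc k) * topk n k v" using eq A(2) by simp
  then show ?thesis using assms(1) by (simp add: field_simps)
qed

lemma topk_ratio:
  assumes "1 \<le> k" "k \<le> k'" "k' \<le> n"
  shows "topk n k' v / real k' \<le> topk n k v / real k"
  using assms(2,3)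
proof (induction k' rule: dec_induct)
  case base then show ?case by simp
next
  case (step m)
  have "topk n (Suc m) v / real (Suc m) \<le> topk n m v / real m"
    by (rule topk_ratio_step) (use step assms(1) in auto)
  then show ?case using step by simp
qed

lemma topk_ratio':
  assumes "1 \<le> k" "k \<le> k'" "k' \<le> n"
  shows "topk n k' v \<le> real k' / real k * topk n k v"
proof -
  have "topk n k' v / real k' \<le> topk n k v / real k" by (rule topk_ratio[OF assms])
  then show ?thesis using assms by (simp add: field_simps)
qed

definition unitv :: "nat \<Rightarrow> nat \<Rightarrow> real" where "unitv j = (\<lambda>i. if i = j then 1 else 0)"

lemma topk_bump:
  assumes f: "\<forall>i<n. 0 \<le> f i" and j: "j < n" and jmax: "\<forall>i<n. f i \<le> f j"
    and c: "0 \<le> c" and k: "1 \<le> k" "k \<le> n"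
  shows "c * topk n k f + a \<le> topk n k (\<lambda>i. c * f i + a * unitv j i)"
proof -
  obtain A where A: "A \<in> ksets n k" "topk n k f = sum f A" using topk_attained[of k n f] k by auto
  have fA: "finite A" and cA: "card A = k" and sA: "A \<subseteq> {..<n}"
    using A(1) unfolding ksets_def using finite_subset by auto
  have sy: "sum (\<lambda>i. c * f i + a * unitv j i) B = c * sum f B + a" if "finite B" "j \<in> B" for B
  proof -
    have "sum (\<lambda>i. c * f i + a * unitv j i) B = c * sum f B + a * sum (unitv j) B"
      by (simp add: sum.distrib sum_distrib_left)
    moreover have "sum (unitv j) B = 1" using that unfolding unitv_def by (simp add: sum.delta)
    ultimately show ?thesis by simp
  qed
  obtain A' where A': "A' \<in> ksets n k" "j \<in> A'" "sum f A \<le> sum f A'"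
  proof (cases "j \<in> A")
    case True then show ?thesis by (intro that[OF A(1) True]) simp
  next
    case False
    have "A \<noteq> {}" using cA k by auto
    then obtain i where i: "i \<in> A" by blast
    define A' where "A' = insert j (A - {i})"
    have c1: "card A \<ge> 1" using fA i card_gt_0_iff[of A] by auto
    have A'k: "A' \<in> ksets n k" unfolding A'_def ksets_def using fA cA sA i j False c1
      by (auto simp: card_insert_if)
    have se: "sum f A' = sum f A - f i + f j" unfolding A'_def using fA i False
      by (simp add: sum_diff1)
    have "i < n" using i sA by auto
    then have fij: "f i \<le> f j" using jmax by simp
    show ?thesis
    proof (rule that[OF A'k])
      show "j \<in> A'" unfolding A'_def by simp
      show "sum f A \<le> sum f A'" using se fij by linarith
    qed
  qed
  have fA': "finite A'" using A'(1) unfolding ksets_def using finite_subset by auto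
  have "c * topk n k f + a \<le> c * sum f A' + a" using A(2) A'(3) c by (simp add: mult_left_mono)
  also have "\<dots> = sum (\<lambda>i. c * f i + a * unitv j i) A'" using sy[OF fA' A'(2)] by simp
  also have "\<dots> \<le> topk n k (\<lambda>i. c * f i + a * unitv j i)" by (rule topk_ge[OF A'(1)])
  finally show ?thesis .
qed

lemma e1_rvec: "1 \<le> n \<Longrightarrow> e1 \<in> rvec n" unfolding rvec_def e1_def by auto

lemma unitv_norm:
  assumes N: "mon_sym_norm n L" and n: "1 \<le> n" and j: "j < n"
  shows "L (unitv j) = L e1"
proof -
  have p: "Transposition.transpose 0 j permutes {..<n}" using n j by (intro permutes_swap_id) auto
  have "unitv j = e1 \<circ> Transposition.transpose 0 j"
    unfolding unitv_def e1_def by (auto simp: Transposition.transpose_def)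
  moreover have "L (e1 \<circ> Transposition.transpose 0 j) = L e1"
    using N e1_rvec[OF n] p unfolding mon_sym_norm_def symmetric_norm_on_def by blast
  ultimately show ?thesis by simp
qed

lemma argmax_exists:
  fixes f :: "nat \<Rightarrow> real"
  assumes "1 \<le> n" shows "\<exists>j<n. \<forall>i<n. f i \<le> f j"
proof -
  have "f 0 \<in> f ` {..<n}" using assms by auto
  then have ne: "f ` {..<n} \<noteq> {}" by auto
  have "Max (f ` {..<n}) \<in> f ` {..<n}" by (rule Max_in) (use ne in auto)
  then obtain j where j: "j < n" "f j = Max (f ` {..<n})" by auto
  have "\<forall>i<n. f i \<le> f j" using j(2) by simp
  then show ?thesis using j(1) by blast
qed

definition Vset :: "nat \<Rightarrow> (nat \<Rightarrow> real) \<Rightarrow> (nat \<Rightarrow> real) set" where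
  "Vset n U = {v. v \<in> rvec n \<and> (\<forall>i<n. 0 \<le> v i) \<and> (\<forall>k. 1 \<le> k \<and> k \<le> n \<longrightarrow> topk n k v \<le> U k)}"

lemma sup_accuracy:
  assumes N: "mon_sym_norm n L" and n: "1 \<le> n" and f: "f \<in> rvec n" "\<forall>i<n. 0 \<le> f i"
    and z: "0 \<le> z" and B: "0 \<le> B"
    and U: "\<And>k. 1 \<le> k \<Longrightarrow> k \<le> n \<Longrightarrow> topk n k f \<le> U k \<and> U k \<le> (1 + z) * topk n k f + B"
  shows "L f \<le> Sup (L ` Vset n U) \<and> Sup (L ` Vset n U) \<le> (1 + z) * L f + B * L e1"
proof -
  have nrm: "is_norm_on n L" using N by (simp add: mon_sym_norm_def)
  obtain j where j: "j < n" "\<forall>i<n. f i \<le> f j" using argmax_exists[OF n, of f] by blast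
  define y where "y = (\<lambda>i. (1 + z) * f i + B * unitv j i)"
  have ur: "unitv j \<in> rvec n" unfolding rvec_def unitv_def using j by auto
  have yr: "y \<in> rvec n" unfolding y_def by (rule rvec_add[OF rvec_scale[OF f(1)] rvec_scale[OF ur]])
  have ynn: "\<forall>i<n. 0 \<le> y i" unfolding y_def unitv_def using f(2) z B by auto
  have Ly: "L y \<le> (1 + z) * L f + B * L e1"
  proof -
    have "L y \<le> L (\<lambda>i. (1 + z) * f i) + L (\<lambda>i. B * unitv j i)"
      unfolding y_def by (rule norm_tri[OF nrm rvec_scale[OF f(1)] rvec_scale[OF ur]])
    also have "\<dots> = (1 + z) * L f + B * L (unitv j)"
      using norm_scale[OF nrm f(1), of "1 + z"] norm_scale[OF nrm ur, of B] z B by simp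
    also have "L (unitv j) = L e1" by (rule unitv_norm[OF N n j(1)])
    finally show ?thesis .
  qed
  have bound: "L v \<le> (1 + z) * L f + B * L e1" if v: "v \<in> Vset n U" for v
  proof -
    have vr: "v \<in> rvec n" "\<forall>i<n. 0 \<le> v i" using v unfolding Vset_def by auto
    have "L v \<le> L y"
    proof (rule kf[OF N vr yr ynn])
      fix k assume k: "1 \<le> k" "k \<le> n"
      have "topk n k v \<le> U k" using v k unfolding Vset_def by auto
      also have "\<dots> \<le> (1 + z) * topk n k f + B" using U[OF k] by simp
      also have "\<dots> \<le> topk n k y" unfolding y_def
        by (rule topk_bump[OF f(2) j(1) j(2) _ k]) (use z in simp)
      finally show "topk n k v \<le> topk n k y" .
    qed
    then show ?thesis using Ly by simp
  qed
  have fV: "f \<in> Vset n U" unfolding Vset_def using f U by auto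
  have bdd: "bdd_above (L ` Vset n U)" using bound by (intro bdd_aboveI) auto
  have "L f \<le> Sup (L ` Vset n U)" by (rule cSup_upper[OF _ bdd]) (use fV in auto)
  moreover have "Sup (L ` Vset n U) \<le> (1 + z) * L f + B * L e1"
    by (rule cSup_least) (use fV bound in auto)
  ultimately show ?thesis by simp
qed



definition cnt :: "nat option list \<Rightarrow> nat \<Rightarrow> nat set \<Rightarrow> nat" where
  "cnt xs t A = card {j. j < t \<and> j < length xs \<and> (\<exists>i\<in>A. xs ! j = Some i)}"

lemma sum_freq: "finite A \<Longrightarrow> sum (freq xs t) A = real (cnt xs t A)"
proof -
  assume fA: "finite A"
  define S where "S i = {j. j < t \<and> j < length xs \<and> xs ! j = Some i}" for i
  have fin: "\<forall>i\<in>A. finite (S i)" unfolding S_def by auto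
  have dis: "\<forall>i\<in>A. \<forall>i'\<in>A. i \<noteq> i' \<longrightarrow> S i \<inter> S i' = {}" unfolding S_def by auto
  have "sum (freq xs t) A = real (\<Sum>i\<in>A. card (S i))" unfolding freq_def S_def by simp
  also have "(\<Sum>i\<in>A. card (S i)) = card (\<Union>i\<in>A. S i)" using card_UN_disjoint[OF fA fin dis] by simp
  also have "(\<Union>i\<in>A. S i) = {j. j < t \<and> j < length xs \<and> (\<exists>i\<in>A. xs ! j = Some i)}"
    unfolding S_def by auto
  finally show ?thesis unfolding cnt_def .
qed

lemma cnt_le: "cnt xs t A \<le> length xs"
proof -
  have "{j. j < t \<and> j < length xs \<and> (\<exists>i\<in>A. xs ! j = Some i)} \<subseteq> {..<length xs}" by auto
  then show ?thesis unfolding cnt_def using card_mono[of "{..<length xs}"] by fastforce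
qed

lemma cnt_mono: "t \<le> t' \<Longrightarrow> cnt xs t A \<le> cnt xs t' A"
  unfolding cnt_def by (rule card_mono) auto

lemma freq_nonneg: "0 \<le> freq xs t i" unfolding freq_def by simp

lemma freq_rvec: assumes "valid_stream n T xs" shows "freq xs t \<in> rvec n"
proof -
  have "freq xs t i = 0" if "n \<le> i" for i
  proof -
    have "{j. j < t \<and> j < length xs \<and> xs ! j = Some i} = {}"
    proof (rule ccontr)
      assume "{j. j < t \<and> j < length xs \<and> xs ! j = Some i} \<noteq> {}"
      then obtain j where j: "j < length xs" "xs ! j = Some i" by auto
      then have "Some i \<in> set xs" by (metis nth_mem)
      then show False using assms that unfolding valid_stream_def by auto
    qed
    then show ?thesis unfolding freq_def by simp
  qed
  then show ?thesis unfolding rvec_def by auto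
qed

lemma topk_freq_nat: "k \<le> n \<Longrightarrow> \<exists>m. topk n k (freq xs t) = real m"
proof -
  assume k: "k \<le> n"
  obtain A where A: "A \<in> ksets n k" "topk n k (freq xs t) = sum (freq xs t) A"
    using topk_attained[OF k] by blast
  have "finite A" using A(1) unfolding ksets_def using finite_subset by auto
  then show ?thesis using A(2) sum_freq by auto
qed

lemma topk_freq_le: "k \<le> n \<Longrightarrow> topk n k (freq xs t) \<le> real (length xs)"
proof (rule topk_leI)
  fix A assume "A \<in> ksets n k"
  then have "finite A" unfolding ksets_def using finite_subset by auto
  then show "sum (freq xs t) A \<le> real (length xs)" using sum_freq cnt_le by simp
qed

lemma topk_freq_mono: "k \<le> n \<Longrightarrow> t \<le> t' \<Longrightarrow> topk n k (freq xs t) \<le> topk n k (freq xs t')"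
proof (rule topk_leI)
  fix A assume k: "k \<le> n" and tt: "t \<le> t'" and A: "A \<in> ksets n k"
  then have "finite A" unfolding ksets_def using finite_subset by auto
  then have "sum (freq xs t) A \<le> sum (freq xs t') A" using sum_freq cnt_mono[OF tt] by simp
  also have "\<dots> \<le> topk n k (freq xs t')" by (rule topk_ge[OF A])
  finally show "sum (freq xs t) A \<le> topk n k (freq xs t')" .
qed

lemma cnt_neighbor:
  assumes "neighboring xs ys" shows "cnt xs t A \<le> cnt ys t A + 1"
proof -
  define D where "D = {j. j < length xs \<and> xs ! j \<noteq> ys ! j}"
  have cD: "card D \<le> 1" unfolding D_def using assms unfolding neighboring_def by (rule conjunct2)
  have fD: "finite D" unfolding D_def by simp
  define Sx where "Sx = {j. j < t \<and> j < length xs \<and> (\<exists>i\<in>A. xs ! j = Some i)}"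
  define Sy where "Sy = {j. j < t \<and> j < length ys \<and> (\<exists>i\<in>A. ys ! j = Some i)}"
  have len: "length xs = length ys" using assms unfolding neighboring_def by simp
  have fSx: "finite Sx" unfolding Sx_def by simp
  have fSy: "finite Sy" unfolding Sy_def by simp
  have sub: "Sx - D \<subseteq> Sy" unfolding Sx_def Sy_def D_def using len by auto
  have "card Sx = card (Sx \<inter> D) + card (Sx - D)" using fSx by (rule card_Int_Diff)
  also have "card (Sx \<inter> D) \<le> card D" using fD by (intro card_mono) auto
  also have "card (Sx - D) \<le> card Sy" using fSy sub by (rule card_mono)
  finally have "card Sx \<le> card D + card Sy" by simp
  then show ?thesis unfolding cnt_def Sx_def[symmetric] Sy_def[symmetric] using cD by simp
qed

lemma neighboring_sym: "neighboring xs ys \<Longrightarrow> neighboring ys xs"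
proof -
  assume a: "neighboring xs ys"
  have l: "length xs = length ys" using a unfolding neighboring_def by (rule conjunct1)
  have c: "card {j. j < length xs \<and> xs ! j \<noteq> ys ! j} \<le> 1" using a unfolding neighboring_def by (rule conjunct2)
  have eq: "{j. j < length ys \<and> ys ! j \<noteq> xs ! j} = {j. j < length xs \<and> xs ! j \<noteq> ys ! j}"
    using l by auto
  show ?thesis unfolding neighboring_def
  proof
    show "length ys = length xs" using l by simp
    show "card {j. j < length ys \<and> ys ! j \<noteq> xs ! j} \<le> 1" unfolding eq by (rule c)
  qed
qed

lemma topk_neighbor:
  assumes "neighboring xs ys" "k \<le> n"
  shows "topk n k (freq xs t) \<le> topk n k (freq ys t) + 1"
proof (rule topk_leI[OF assms(2)])
  fix A assume A: "A \<in> ksets n k"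
  then have "finite A" unfolding ksets_def using finite_subset by auto
  have "real (cnt xs t A) \<le> real (cnt ys t A + 1)" by (rule of_nat_mono[OF cnt_neighbor[OF assms(1)]])
  then have "sum (freq xs t) A \<le> sum (freq ys t) A + 1" using sum_freq[OF \<open>finite A\<close>] by simp
  also have "\<dots> \<le> topk n k (freq ys t) + 1" using topk_ge[OF A] by simp
  finally show "sum (freq xs t) A \<le> topk n k (freq ys t) + 1" .
qed

lemma freq_take:
  assumes "length xs = length ys" "take t xs = take t ys" "t' \<le> t"
  shows "freq xs t' = freq ys t'"
proof -
  have "xs ! j = ys ! j" if "j < t'" "j < length xs" for j
  proof -
    have "xs ! j = take t xs ! j" using that assms(3) by simp
    also have "\<dots> = take t ys ! j" using assms(2) by simp
    also have "\<dots> = ys ! j" using that assms(1,3) by simp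
    finally show ?thesis .
  qed
  then show ?thesis unfolding freq_def using assms(1) by (intro ext arg_cong[where f=real] arg_cong[where f=card]) auto
qed



locale mech =
  fixes n T :: nat and eps zeta :: real
  assumes n1: "1 \<le> n" and T1: "1 \<le> T" and eps: "0 < eps" and z0: "0 < zeta" and z1: "zeta \<le> 1/2"
begin

definition "eta = zeta / 4"
definition "L0 = ln (real n * real T + 2)"
definition "m0 = nat \<lceil>8 * L0 / zeta\<rceil>"
definition "Idx = {..m0} \<times> {..m0}"
definition "kg c = min n (nat \<lfloor>(1 + eta) ^ c\<rfloor>)"
definition "tau a = real_of_int \<lfloor>(1 + eta) ^ a\<rfloor>"
definition "epsp = eps / (3 * real (card Idx))"
definition "pp = 1 - exp (- epsp)"
definition "Dom = Idx \<times> {..T}"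
definition "W = Pi_pmf Dom 0 (\<lambda>_. geometric_pmf pp)"
definition "E = nat \<lfloor>ln (3 * real (card Dom)) / epsp\<rfloor>"
definition "q c xs t = topk n (kg c) (freq xs t)"
definition "cond i xs (w :: (nat \<times> nat) \<times> nat \<Rightarrow> nat) t =
   (tau (snd i) + real (w (i, 0)) \<le> q (fst i) xs t + real (w (i, t)))"
definition "first P = (if \<exists>t. 1 \<le> t \<and> t \<le> T \<and> P t then LEAST t. 1 \<le> t \<and> t \<le> T \<and> P t else Suc T)"
definition "stop i xs w = first (cond i xs w)"
definition "sv xs w = restrict (\<lambda>i. stop i xs w) Idx"
definition "Uh st c = Min (insert (real T) ((\<lambda>a. tau a + real E - 1) ` {a. a \<le> m0 \<and> \<not> st (c, a)}))"
definition "Uk st k = Min (Uh st ` {c. c \<le> m0 \<and> k \<le> kg c})"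
definition "Phi (\<sigma> :: nat \<times> nat \<Rightarrow> nat) = (\<lambda>(s::nat) L. Sup (L ` Vset n (Uk (\<lambda>i. \<sigma> i \<le> s))))"
definition "M xs = map_pmf (\<lambda>w. Phi (sv xs w)) W"

lemma first_cases:
  "(1 \<le> first P \<and> first P \<le> T \<and> P (first P) \<and> (\<forall>t. 1 \<le> t \<longrightarrow> t < first P \<longrightarrow> \<not> P t)) \<or>
   (first P = Suc T \<and> (\<forall>t. 1 \<le> t \<longrightarrow> t \<le> T \<longrightarrow> \<not> P t))"
proof (cases "\<exists>t. 1 \<le> t \<and> t \<le> T \<and> P t")
  case True
  then obtain t0 where t0: "1 \<le> t0 \<and> t0 \<le> T \<and> P t0" by blast
  have f: "first P = (LEAST t. 1 \<le> t \<and> t \<le> T \<and> P t)" unfolding first_def using True by simp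
  have a: "1 \<le> first P \<and> first P \<le> T \<and> P (first P)" unfolding f by (rule LeastI[of _ t0]) (rule t0)
  have b: "\<forall>t. 1 \<le> t \<longrightarrow> t < first P \<longrightarrow> \<not> P t"
  proof (intro allI impI)
    fix t assume t: "1 \<le> t" "t < first P"
    show "\<not> P t"
    proof
      assume "P t"
      then have "first P \<le> t" unfolding f using t a by (intro Least_le) simp
      then show False using t by simp
    qed
  qed
  show ?thesis using a b by blast
next
  case False
  then show ?thesis unfolding first_def by auto
qed

lemma first_le_iff: "s \<le> T \<Longrightarrow> (first P \<le> s) = (\<exists>t. 1 \<le> t \<and> t \<le> s \<and> P t)"
proof -
  assume s: "s \<le> T"
  show ?thesis
  proof
    assume "first P \<le> s"
    then show "\<exists>t. 1 \<le> t \<and> t \<le> s \<and> P t" using first_cases[of P] s by auto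
  next
    assume "\<exists>t. 1 \<le> t \<and> t \<le> s \<and> P t"
    then obtain t where t: "1 \<le> t" "t \<le> s" "P t" by blast
    show "first P \<le> s"
    proof (rule ccontr)
      assume "\<not> first P \<le> s"
      then have "t < first P" using t by simp
      then show False using first_cases[of P] t s by auto
    qed
  qed
qed

lemma first_range: "1 \<le> first P \<and> first P \<le> Suc T"
  using first_cases[of P] by auto

lemma first_transfer:
  assumes no: "\<And>t. 1 \<le> t \<Longrightarrow> t \<le> T \<Longrightarrow> t < first P \<Longrightarrow> \<not> P' t"
    and yes: "first P \<le> T \<Longrightarrow> P' (first P)"
  shows "first P' = first P"
proof (cases "first P \<le> T")
  case True
  have fP: "1 \<le> first P" using first_range[of P] by simp
  have "P' (first P)" using yes True by simp
  then have "first P' \<le> first P" using first_le_iff[OF True, of P'] fP True by blast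
  moreover have "\<not> first P' < first P"
  proof
    assume lt: "first P' < first P"
    then have "first P' \<le> T" using True by simp
    then have "P' (first P')" "1 \<le> first P'" using first_cases[of P'] by auto
    then show False using no[of "first P'"] lt True by simp
  qed
  ultimately show ?thesis by simp
next
  case False
  then have eq: "first P = Suc T" using first_range[of P] by simp
  have "\<forall>t. 1 \<le> t \<longrightarrow> t \<le> T \<longrightarrow> \<not> P' t" using no eq by simp
  then have "first P' = Suc T" unfolding first_def by auto
  then show ?thesis using eq by simp
qed

end


context mech begin

lemma eta_pos: "0 < eta" "eta \<le> 1/8" using z0 z1 by (auto simp: eta_def)

lemma finite_Idx: "finite Idx" by (simp add: Idx_def)
lemma card_Idx: "card Idx = (Suc m0) * (Suc m0)" by (simp add: Idx_def card_cartesian_product)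
lemma card_Idx_pos: "0 < card Idx" by (simp add: card_Idx)
lemma finite_Dom: "finite Dom" by (simp add: Dom_def finite_Idx)
lemma card_Dom: "card Dom = card Idx * Suc T" by (simp add: Dom_def card_cartesian_product)

lemma epsp_pos: "0 < epsp" unfolding epsp_def using eps card_Idx_pos by simp
lemma pp_range: "0 < pp" "pp < 1" "1 - pp = exp (- epsp)"
  unfolding pp_def using epsp_pos by auto

lemma kg_le: "kg c \<le> n" by (simp add: kg_def)

lemma stop_take:
  assumes xs: "valid_stream n T xs" and ys: "valid_stream n T ys" and tk: "take t xs = take t ys"
    and st: "s \<le> t"
  shows "(stop i xs w \<le> s) = (stop i ys w \<le> s)"
proof (cases "s \<le> T")
  case True
  have len: "length xs = length ys" using xs ys by (simp add: valid_stream_def)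
  have "cond i xs w t' = cond i ys w t'" if "t' \<le> s" for t'
  proof -
    have "freq xs t' = freq ys t'" by (rule freq_take[OF len tk]) (use that st in simp)
    then show ?thesis unfolding cond_def q_def by simp
  qed
  then have "(\<exists>t'. 1 \<le> t' \<and> t' \<le> s \<and> cond i xs w t') = (\<exists>t'. 1 \<le> t' \<and> t' \<le> s \<and> cond i ys w t')"
    by blast
  then show ?thesis unfolding stop_def using first_le_iff[OF True] by simp
next
  case False
  then show ?thesis unfolding stop_def using first_range[of "cond i xs w"] first_range[of "cond i ys w"]
    by simp
qed

lemma continual_M: "continual n T M"
  unfolding continual_def
proof (intro allI impI)
  fix xs ys t
  assume a: "valid_stream n T xs \<and> valid_stream n T ys \<and> take t xs = take t ys"
  have eqs: "prefix_output t (Phi (sv xs w)) = prefix_output t (Phi (sv ys w))" for w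
  proof
    fix s
    show "prefix_output t (Phi (sv xs w)) s = prefix_output t (Phi (sv ys w)) s"
    proof (cases "s \<le> t")
      case True
      have "(\<lambda>i. sv xs w i \<le> s) = (\<lambda>i. sv ys w i \<le> s)"
      proof
        fix i
        show "(sv xs w i \<le> s) = (sv ys w i \<le> s)"
          unfolding sv_def using stop_take[of xs ys t s i w] a True by simp
      qed
      then show ?thesis unfolding prefix_output_def Phi_def by simp
    next
      case False
      then show ?thesis unfolding prefix_output_def by simp
    qed
  qed
  show "map_pmf (prefix_output t) (M xs) = map_pmf (prefix_output t) (M ys)"
    unfolding M_def pmf.map_comp o_def using eqs by simp
qed

end


context mech begin

definition "delta \<sigma> x = (if fst x \<in> Idx then (if snd x = 0 then 1 else if snd x = \<sigma> (fst x) \<and> snd x \<le> T then 2 else 0) else (0::nat))"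

definition "shft \<sigma> (w :: (nat \<times> nat) \<times> nat \<Rightarrow> nat) = (\<lambda>x. w x + delta \<sigma> x)"

lemma shft_apply: "shft \<sigma> w x = w x + delta \<sigma> x" unfolding shft_def by simp

lemma delta_out: "x \<notin> Dom \<Longrightarrow> delta \<sigma> x = 0"
  unfolding delta_def Dom_def by (cases x) auto

lemma delta_sum: "sum (delta \<sigma>) Dom \<le> 3 * card Idx"
proof -
  have "sum (delta \<sigma>) Dom = (\<Sum>i\<in>Idx. \<Sum>t\<in>{..T}. delta \<sigma> (i, t))"
    unfolding Dom_def by (simp add: sum.cartesian_product)
  also have "\<dots> \<le> (\<Sum>i\<in>Idx. 3)"
  proof (rule sum_mono)
    fix i assume i: "i \<in> Idx"
    have "(\<Sum>t\<in>{..T}. delta \<sigma> (i, t)) \<le> (\<Sum>t\<in>{..T}. (if t = 0 then 1 else 0) + (if t = \<sigma> i then 2 else 0))"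
      using i by (intro sum_mono) (auto simp: delta_def)
    also have "\<dots> = 1 + (if \<sigma> i \<in> {..T} then 2 else 0)"
      by (simp add: sum.distrib sum.delta)
    also have "\<dots> \<le> 3" by simp
    finally show "(\<Sum>t\<in>{..T}. delta \<sigma> (i, t)) \<le> 3" .
  qed
  also have "\<dots> = 3 * card Idx" by simp
  finally show ?thesis .
qed

lemma pmf_W_shift: "pmf W w \<le> exp eps * pmf W (shft \<sigma> w)"
proof (cases "\<forall>x. x \<notin> Dom \<longrightarrow> w x = 0")
  case True
  have True': "\<forall>x. x \<notin> Dom \<longrightarrow> shft \<sigma> w x = 0" using True delta_out by (simp add: shft_apply)
  have pg: "pmf (geometric_pmf pp) m = (1 - pp) ^ m * pp" for m
    using pp_range(1,2) by simp
  have p1: "pmf W w = (\<Prod>x\<in>Dom. (1 - pp) ^ w x * pp)"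
    unfolding W_def pg[symmetric] by (rule pmf_Pi'[OF finite_Dom]) (use True in auto)
  have p2: "pmf W (shft \<sigma> w) = (\<Prod>x\<in>Dom. (1 - pp) ^ (w x + delta \<sigma> x) * pp)"
    unfolding W_def pg[symmetric] shft_apply[symmetric] by (rule pmf_Pi'[OF finite_Dom]) (use True' in auto)
  have "(\<Prod>x\<in>Dom. (1 - pp) ^ (w x + delta \<sigma> x) * pp) = (\<Prod>x\<in>Dom. (1 - pp) ^ delta \<sigma> x) * (\<Prod>x\<in>Dom. (1 - pp) ^ w x * pp)"
    by (simp add: power_add prod.distrib mult_ac)
  also have "(\<Prod>x\<in>Dom. (1 - pp) ^ delta \<sigma> x) = (1 - pp) ^ sum (delta \<sigma>) Dom" by (simp add: power_sum)
  also have "\<dots> = exp (- epsp * real (sum (delta \<sigma>) Dom))"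
    using pp_range(3) by (simp add: exp_of_nat_mult[symmetric] mult_ac)
  finally have p3: "pmf W (shft \<sigma> w) = exp (- epsp * real (sum (delta \<sigma>) Dom)) * pmf W w"
    using p1 p2 by simp
  have "epsp * real (sum (delta \<sigma>) Dom) \<le> epsp * (3 * real (card Idx))"
  proof (rule mult_left_mono)
    show "real (sum (delta \<sigma>) Dom) \<le> 3 * real (card Idx)" using of_nat_mono[OF delta_sum[of \<sigma>]] by simp
  qed (use epsp_pos in simp)
  also have "\<dots> = eps" unfolding epsp_def using card_Idx_pos by simp
  finally have le: "epsp * real (sum (delta \<sigma>) Dom) \<le> eps" .
  have "pmf W w = exp (epsp * real (sum (delta \<sigma>) Dom)) * pmf W (shft \<sigma> w)"
    using p3 by (simp add: exp_minus field_simps)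
  also have "\<dots> \<le> exp eps * pmf W (shft \<sigma> w)" using le by (intro mult_right_mono) auto
  finally show ?thesis .
next
  case False
  then have "pmf W w = 0" unfolding W_def using finite_Dom by (subst pmf_Pi) auto
  then show ?thesis by simp
qed

lemma shft_inj: "inj (shft \<sigma>)"
proof (rule injI)
  fix x y assume eq: "shft \<sigma> x = shft \<sigma> y"
  show "x = y"
  proof
    fix z
    have "x z + delta \<sigma> z = y z + delta \<sigma> z" using fun_cong[OF eq, of z] by (simp add: shft_apply)
    then show "x z = y z" by simp
  qed
qed

lemma measure_shift:
  assumes inj: "inj h" and c: "0 \<le> c" and le: "\<And>w. pmf p w \<le> c * pmf p (h w)"
  shows "measure p A \<le> c * measure p (h ` A)"
proof -
  have ij: "inj_on h A" using inj by (rule inj_on_subset) simp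
  note s1 = abs_summable_on_reindex_iff[OF ij, of "pmf p", THEN iffD2, OF pmf_abs_summable]
  have "measure p A = infsetsum (pmf p) A" by (rule measure_pmf_conv_infsetsum)
  also have "\<dots> \<le> infsetsum (\<lambda>w. c * pmf p (h w)) A"
    by (rule infsetsum_mono) (use s1 le in auto)
  also have "\<dots> = c * infsetsum (\<lambda>w. pmf p (h w)) A" by (rule infsetsum_cmult_right) (use s1 in auto)
  also have "infsetsum (\<lambda>w. pmf p (h w)) A = infsetsum (pmf p) (h ` A)"
    by (rule infsetsum_reindex_bij_betw) (rule inj_on_imp_bij_betw[OF ij])
  also have "\<dots> = measure p (h ` A)" by (rule measure_pmf_conv_infsetsum[symmetric])
  finally show ?thesis .
qed

lemma q_neighbor:
  assumes "neighboring xs ys" shows "q c ys t \<le> q c xs t + 1" "q c xs t \<le> q c ys t + 1"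
  unfolding q_def using topk_neighbor[OF neighboring_sym[OF assms] kg_le] topk_neighbor[OF assms kg_le] by auto

lemma stop_shift:
  assumes nb: "neighboring xs ys" and i: "i \<in> Idx" and st: "stop i xs w = \<sigma> i"
  shows "stop i ys (shft \<sigma> w) = \<sigma> i"
proof -
  let ?P = "cond i xs w" and ?P' = "cond i ys (shft \<sigma> w)"
  have s0: "first ?P = \<sigma> i" using st unfolding stop_def .
  have w0: "shft \<sigma> w (i, 0) = w (i, 0) + 1" unfolding shft_apply delta_def using i by simp
  have "first ?P' = first ?P"
  proof (rule first_transfer)
    fix t assume t: "1 \<le> t" "t \<le> T" "t < first ?P"
    have np: "\<not> ?P t" using first_cases[of ?P] t by auto
    have wt: "shft \<sigma> w (i, t) = w (i, t)" unfolding shft_apply delta_def using i t s0 by simp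
    show "\<not> ?P' t" using np q_neighbor(1)[OF nb, of "fst i" t] unfolding cond_def wt w0 by simp
  next
    assume le: "first ?P \<le> T"
    have p: "?P (first ?P)" using first_cases[of ?P] le by auto
    have ge1: "1 \<le> first ?P" using first_range[of ?P] by simp
    have wt: "shft \<sigma> w (i, first ?P) = w (i, first ?P) + 2" unfolding shft_apply delta_def using i le s0 ge1 by simp
    show "?P' (first ?P)" using p q_neighbor(2)[OF nb, of "fst i" "first ?P"] unfolding cond_def wt w0 by simp
  qed
  then show ?thesis using s0 unfolding stop_def by simp
qed

lemma sv_shift:
  assumes nb: "neighboring xs ys" and sv: "sv xs w = \<sigma>"
  shows "sv ys (shft \<sigma> w) = \<sigma>"
proof
  fix i
  show "sv ys (shft \<sigma> w) i = \<sigma> i"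
  proof (cases "i \<in> Idx")
    case True
    have "stop i xs w = \<sigma> i" using sv True unfolding sv_def by auto
    then show ?thesis using stop_shift[OF nb True] True unfolding sv_def by simp
  next
    case False
    then show ?thesis using sv unfolding sv_def by auto
  qed
qed

lemma prob_sv:
  assumes nb: "neighboring xs ys"
  shows "measure W {w. sv xs w = \<sigma>} \<le> exp eps * measure W {w. sv ys w = \<sigma>}"
proof -
  have "measure W {w. sv xs w = \<sigma>} \<le> exp eps * measure W (shft \<sigma> ` {w. sv xs w = \<sigma>})"
    by (rule measure_shift[OF shft_inj]) (auto intro: pmf_W_shift)
  also have "measure W (shft \<sigma> ` {w. sv xs w = \<sigma>}) \<le> measure W {w. sv ys w = \<sigma>}"
    using sv_shift[OF nb] by (intro measure_pmf.finite_measure_mono) auto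
  finally show ?thesis by (simp add: mult_left_mono)
qed

definition "Sig = PiE Idx (\<lambda>_. {1..Suc T})"

lemma finite_Sig: "finite Sig" unfolding Sig_def using finite_Idx by (intro finite_PiE) auto

lemma sv_Sig: "sv xs w \<in> Sig"
  unfolding Sig_def sv_def stop_def using first_range by auto

lemma dp_M: "event_level_dp n T eps M"
  unfolding event_level_dp_def
proof (intro allI impI)
  fix xs ys :: "nat option list" and S
  assume a: "valid_stream n T xs \<and> valid_stream n T ys \<and> neighboring xs ys"
  then have nb: "neighboring xs ys" by simp
  define Qx where "Qx = map_pmf (sv xs) W"
  define Qy where "Qy = map_pmf (sv ys) W"
  have Mx: "M xs = map_pmf Phi Qx" unfolding M_def Qx_def pmf.map_comp o_def ..
  have My: "M ys = map_pmf Phi Qy" unfolding M_def Qy_def pmf.map_comp o_def ..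
  define X where "X = Phi -` S"
  have sx: "set_pmf Qx \<subseteq> Sig" unfolding Qx_def using sv_Sig by auto
  have "measure Qx X = measure Qx (X \<inter> set_pmf Qx)" by (rule measure_Int_set_pmf[symmetric])
  also have "\<dots> \<le> measure Qx (X \<inter> Sig)" using sx by (intro measure_pmf.finite_measure_mono) auto
  also have "\<dots> = sum (pmf Qx) (X \<inter> Sig)" using finite_Sig by (intro measure_measure_pmf_finite) simp
  also have "\<dots> \<le> sum (\<lambda>\<sigma>. exp eps * pmf Qy \<sigma>) (X \<inter> Sig)"
  proof (rule sum_mono)
    fix \<sigma>
    have "pmf Qx \<sigma> = measure W {w. sv xs w = \<sigma>}" unfolding Qx_def pmf_map vimage_def by simp
    also have "\<dots> \<le> exp eps * measure W {w. sv ys w = \<sigma>}" by (rule prob_sv[OF nb])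
    also have "measure W {w. sv ys w = \<sigma>} = pmf Qy \<sigma>" unfolding Qy_def pmf_map vimage_def by simp
    finally show "pmf Qx \<sigma> \<le> exp eps * pmf Qy \<sigma>" .
  qed
  also have "\<dots> = exp eps * sum (pmf Qy) (X \<inter> Sig)" by (simp add: sum_distrib_left)
  also have "sum (pmf Qy) (X \<inter> Sig) = measure Qy (X \<inter> Sig)"
    using finite_Sig by (intro measure_measure_pmf_finite[symmetric]) simp
  also have "\<dots> \<le> measure Qy X" by (intro measure_pmf.finite_measure_mono) auto
  finally have "measure Qx X \<le> exp eps * measure Qy X" by (simp add: mult_left_mono)
  then show "measure_pmf.prob (M xs) S \<le> exp eps * measure_pmf.prob (M ys) S"
    unfolding Mx My X_def by simp
qed

end


context mech begin

lemma L0_ge1: "1 \<le> L0"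
proof -
  have "1 * 1 \<le> real n * real T" by (rule mult_mono) (use n1 T1 in auto)
  then have "3 \<le> real n * real T + 2" by simp
  then have "ln 3 \<le> L0" unfolding L0_def by simp
  moreover have "1 \<le> ln (3::real)"
  proof -
    have "exp 1 \<le> (3::real)" using exp_le by simp
    then show ?thesis using ln_ge_iff by (metis exp_gt_zero ln_exp ln_le_cancel_iff zero_less_numeral)
  qed
  ultimately show ?thesis by simp
qed

lemma pow_big: "real n * real T + 2 \<le> (1 + eta) ^ m0"
proof -
  have e: "0 < eta" "eta \<le> 1/8" using eta_pos by auto
  have "eta - eta\<^sup>2 \<le> ln (1 + eta)" by (rule ln_one_plus_pos_lower_bound) (use e in auto)
  moreover have "eta / 2 \<le> eta - eta\<^sup>2" using e by (simp add: power2_eq_square)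
  ultimately have lb: "eta / 2 \<le> ln (1 + eta)" by simp
  have m: "8 * L0 / zeta \<le> real m0" unfolding m0_def by (rule real_nat_ceiling_ge)
  have "L0 = (8 * L0 / zeta) * (eta / 2)" using z0 by (simp add: eta_def field_simps)
  also have "\<dots> \<le> real m0 * ln (1 + eta)"
    using m lb L0_ge1 z0 e by (intro mult_mono) auto
  finally have "L0 \<le> real m0 * ln (1 + eta)" .
  then have "exp L0 \<le> exp (real m0 * ln (1 + eta))" by simp
  also have "\<dots> = (1 + eta) ^ m0" using e by (simp add: exp_of_nat_mult)
  moreover have "0 < real n * real T + 2" by (simp add: add_nonneg_pos)
  ultimately show ?thesis unfolding L0_def by simp
qed

lemma tau_grid:
  assumes y: "1 \<le> y" "y \<le> T"
  shows "\<exists>a\<le>m0. real y \<le> tau a \<and> tau a - 1 \<le> (1 + 2 * eta) * (real y - 1)"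
proof -
  have e: "0 < eta" "eta \<le> 1/8" using eta_pos by auto
  have ex: "real y \<le> (1 + eta) ^ m0"
  proof -
    have "real y \<le> real n * real T + 2" using y n1 by (smt (verit) of_nat_mono mult_le_cancel_right1 of_nat_1 of_nat_0_le_iff)
    then show ?thesis using pow_big by simp
  qed
  define a where "a = (LEAST a. real y \<le> (1 + eta) ^ a)"
  have ay: "real y \<le> (1 + eta) ^ a" unfolding a_def by (rule LeastI[of _ m0]) (rule ex)
  have am: "a \<le> m0" unfolding a_def by (rule Least_le) (rule ex)
  have "int y \<le> \<lfloor>(1 + eta) ^ a\<rfloor>" using ay by (simp add: le_floor_iff)
  then have ty: "real y \<le> tau a" unfolding tau_def by (metis of_int_le_iff of_int_of_nat_eq)
  have tu: "tau a \<le> (1 + eta) ^ a" unfolding tau_def by simp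
  have "tau a - 1 \<le> (1 + 2 * eta) * (real y - 1)"
  proof (cases a)
    case 0
    then have "tau a = 1" unfolding tau_def by simp
    then show ?thesis using y e by simp
  next
    case (Suc b)
    have "\<not> real y \<le> (1 + eta) ^ b" unfolding a_def
      using not_less_Least[of b "\<lambda>a. real y \<le> (1 + eta) ^ a"] Suc a_def by simp
    then have "(1 + eta) ^ b < real y" by simp
    then have "(1 + eta) ^ a < (1 + eta) * real y" using Suc e by simp
    then have lt: "tau a < (1 + eta) * real y" using tu by simp
    show ?thesis
    proof (cases "y = 1")
      case True
      then have "tau a < 2" using lt e by simp
      moreover have "tau a \<in> \<int>" unfolding tau_def by simp
      ultimately have "tau a \<le> 1" unfolding Ints_def using lt
        by (auto simp: of_int_less_iff[symmetric])
      then show ?thesis using True by simp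
    next
      case False
      then have "2 \<le> real y" using y by simp
      then have "(1 + eta) * real y - 1 \<le> (1 + 2 * eta) * (real y - 1)" using e by (simp add: algebra_simps)
      then show ?thesis using lt by simp
    qed
  qed
  then show ?thesis using am ty by blast
qed

lemma kg_grid:
  assumes k: "1 \<le> k" "k \<le> n"
  shows "\<exists>c\<le>m0. k \<le> kg c \<and> real (kg c) \<le> (1 + eta) * real k"
proof -
  have e: "0 < eta" "eta \<le> 1/8" using eta_pos by auto
  have ex: "real k \<le> (1 + eta) ^ m0"
  proof -
    have "real k \<le> real n * real T + 2" using k T1 by (smt (verit) of_nat_mono mult_le_cancel_left1 of_nat_1 of_nat_0_le_iff)
    then show ?thesis using pow_big by simp
  qed
  define c where "c = (LEAST c. real k \<le> (1 + eta) ^ c)"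
  have ck: "real k \<le> (1 + eta) ^ c" unfolding c_def by (rule LeastI[of _ m0]) (rule ex)
  have cm: "c \<le> m0" unfolding c_def by (rule Least_le) (rule ex)
  have fl: "k \<le> nat \<lfloor>(1 + eta) ^ c\<rfloor>" using ck by (simp add: le_nat_floor le_floor_iff)
  then have kk: "k \<le> kg c" unfolding kg_def using k by simp
  have "real (kg c) \<le> real (nat \<lfloor>(1 + eta) ^ c\<rfloor>)" unfolding kg_def by simp
  also have "\<dots> \<le> (1 + eta) ^ c" using e by simp
  also have "\<dots> \<le> (1 + eta) * real k"
  proof (cases c)
    case 0
    have a1: "real k \<le> (1 + eta) * real k" using e by (simp add: algebra_simps)
    have a2: "1 \<le> real k" using k(1) by simp
    have "(1 + eta) ^ c = 1" using 0 by simp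
    then show ?thesis using a1 a2 by linarith
  next
    case (Suc b)
    have "\<not> real k \<le> (1 + eta) ^ b"
      using not_less_Least[of b "\<lambda>c. real k \<le> (1 + eta) ^ c"] Suc c_def by simp
    then show ?thesis using Suc e by simp
  qed
  finally show ?thesis using cm kk by blast
qed

end


context mech begin

definition "Good = {w. \<forall>x\<in>Dom. w x \<le> E}"

lemma q_mono: "t \<le> t' \<Longrightarrow> q c xs t \<le> q c xs t'"
  unfolding q_def by (rule topk_freq_mono[OF kg_le])

lemma q_nat: "\<exists>m. q c xs t = real m"
  unfolding q_def by (rule topk_freq_nat[OF kg_le])

lemma q_le: "valid_stream n T xs \<Longrightarrow> q c xs t \<le> real T"
  unfolding q_def using topk_freq_le[OF kg_le, of c xs t] by (simp add: valid_stream_def)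

lemma q_nonneg: "0 \<le> q c xs t"
  unfolding q_def by (rule topk_nonneg[OF kg_le]) (simp add: freq_nonneg)

lemma stopped_lb:
  assumes w: "w \<in> Good" and i: "(c, a) \<in> Idx" and t: "t \<le> T" and st: "stop (c, a) xs w \<le> t"
  shows "tau a - real E \<le> q c xs t"
proof -
  obtain t' where t': "1 \<le> t'" "t' \<le> t" "cond (c, a) xs w t'"
    using st first_le_iff[OF t] unfolding stop_def by blast
  have "((c, a), t') \<in> Dom" using i t' t unfolding Dom_def by auto
  then have "w ((c, a), t') \<le> E" using w unfolding Good_def by blast
  then have "tau a \<le> q c xs t' + real E" using t'(3) unfolding cond_def by simp
  moreover have "q c xs t' \<le> q c xs t" using t'(2) by (rule q_mono)
  ultimately show ?thesis by simp
qed

lemma notstopped_ub: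
  assumes w: "w \<in> Good" and i: "(c, a) \<in> Idx" and t: "1 \<le> t" "t \<le> T" and st: "\<not> stop (c, a) xs w \<le> t"
  shows "q c xs t < tau a + real E"
proof -
  have "\<not> cond (c, a) xs w t" using st first_le_iff[OF t(2)] t unfolding stop_def by blast
  moreover have "((c, a), 0) \<in> Dom" using i unfolding Dom_def by auto
  then have "w ((c, a), 0) \<le> E" using w unfolding Good_def by blast
  ultimately show ?thesis unfolding cond_def by simp
qed

lemma int_strict:
  fixes m :: nat and z :: int and e :: nat
  assumes "real m < real_of_int z + real e" shows "real m \<le> real_of_int z + real e - 1"
proof -
  have "int m < z + int e" using assms by linarith
  then have "int m \<le> z + int e - 1" by simp
  then show ?thesis by linarith
qed

lemma Uh_bounds:
  assumes w: "w \<in> Good" and c: "c \<le> m0" and t: "1 \<le> t" "t \<le> T" and xs: "valid_stream n T xs"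
  defines "st \<equiv> (\<lambda>i. sv xs w i \<le> t)"
  shows "q c xs t \<le> Uh st c" "Uh st c \<le> (1 + 2 * eta) * (q c xs t + real E) + real E"
proof -
  obtain m where m: "q c xs t = real m" using q_nat by blast
  have mT: "real m \<le> real T" using q_le[OF xs, of c t] unfolding m .
  define X where "X = (\<lambda>a. tau a + real E - 1) ` {a. a \<le> m0 \<and> \<not> st (c, a)}"
  have fX: "finite (insert (real T) X)" unfolding X_def by simp
  have stI: "st (c, a) = (stop (c, a) xs w \<le> t)" if "a \<le> m0" for a
    unfolding st_def sv_def using that c by (simp add: Idx_def)
  have U: "Uh st c = Min (insert (real T) X)" unfolding Uh_def X_def ..
  show "q c xs t \<le> Uh st c"
    unfolding U
  proof (rule Min.boundedI[OF fX])
    show "insert (real T) X \<noteq> {}" by simp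
    fix x assume x: "x \<in> insert (real T) X"
    show "q c xs t \<le> x"
    proof (cases "x = real T")
      case True then show ?thesis using mT m by simp
    next
      case False
      then obtain a where a: "a \<le> m0" "\<not> st (c, a)" "x = tau a + real E - 1" using x unfolding X_def by auto
      have ai: "(c, a) \<in> Idx" using a c by (simp add: Idx_def)
      have "q c xs t < tau a + real E" using notstopped_ub[OF w ai t] a(2) stI[OF a(1)] by simp
      then have "real m \<le> tau a + real E - 1" unfolding m tau_def by (rule int_strict)
      then show ?thesis using a m by simp
    qed
  qed
  show "Uh st c \<le> (1 + 2 * eta) * (q c xs t + real E) + real E"
  proof (cases "T \<le> m + E")
    case True
    have "Uh st c \<le> real T" unfolding U using fX by (intro Min_le) auto
    also have "\<dots> \<le> real m + real E" using True by linarith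
    also have "\<dots> \<le> (1 + 2 * eta) * (real m + real E) + real E" using eta_pos by (simp add: algebra_simps)
    finally show ?thesis using m by simp
  next
    case False
    define y where "y = m + E + 1"
    have y: "1 \<le> y" "y \<le> T" using False by (auto simp: y_def)
    obtain a where a: "a \<le> m0" "real y \<le> tau a" "tau a - 1 \<le> (1 + 2 * eta) * (real y - 1)"
      using tau_grid[OF y] by blast
    have ai: "(c, a) \<in> Idx" using a c by (simp add: Idx_def)
    have ns: "\<not> st (c, a)"
    proof
      assume "st (c, a)"
      then have "stop (c, a) xs w \<le> t" using stI[OF a(1)] by simp
      then have "tau a - real E \<le> q c xs t" using stopped_lb[OF w ai t(2)] by simp
      then show False using a(2) m unfolding y_def by simp
    qed
    then have "tau a + real E - 1 \<in> X" unfolding X_def using a(1) by auto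
    then have "Uh st c \<le> tau a + real E - 1" unfolding U using fX by (intro Min_le) auto
    also have "\<dots> \<le> (1 + 2 * eta) * (real y - 1) + real E" using a(3) by simp
    also have "real y - 1 = real m + real E" unfolding y_def by simp
    finally show ?thesis using m by simp
  qed
qed

lemma kg_m0: "kg m0 = n"
proof -
  have "real n \<le> (1 + eta) ^ m0"
  proof -
    have "real n \<le> real n * real T + 2" using T1 by (smt (verit) of_nat_mono mult_le_cancel_left1 of_nat_1 of_nat_0_le_iff)
    then show ?thesis using pow_big by simp
  qed
  then have "n \<le> nat \<lfloor>(1 + eta) ^ m0\<rfloor>" by (simp add: le_nat_floor le_floor_iff)
  then show ?thesis unfolding kg_def by simp
qed

lemma Uk_bounds:
  assumes w: "w \<in> Good" and t: "1 \<le> t" "t \<le> T" and xs: "valid_stream n T xs" and k: "1 \<le> k" "k \<le> n"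
  defines "st \<equiv> (\<lambda>i. sv xs w i \<le> t)"
  shows "topk n k (freq xs t) \<le> Uk st k \<and> Uk st k \<le> (1 + zeta) * topk n k (freq xs t) + 3 * real E"
proof -
  define f where "f = freq xs t"
  have fnn: "\<forall>i<n. 0 \<le> f i" unfolding f_def by (simp add: freq_nonneg)
  define C where "C = {c. c \<le> m0 \<and> k \<le> kg c}"
  have fC: "finite C" unfolding C_def by simp
  have neC: "C \<noteq> {}" unfolding C_def using kg_m0 k by auto
  have U: "Uk st k = Min (Uh st ` C)" unfolding Uk_def C_def ..
  have lb: "topk n k f \<le> Uk st k"
    unfolding U
  proof (rule Min.boundedI)
    show "finite (Uh st ` C)" using fC by simp
    show "Uh st ` C \<noteq> {}" using neC by simp
    fix x assume "x \<in> Uh st ` C"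
    then obtain c where c: "c \<le> m0" "k \<le> kg c" "x = Uh st c" unfolding C_def by auto
    have "topk n k f \<le> topk n (kg c) f" by (rule topk_mono_k[OF c(2) kg_le fnn])
    also have "\<dots> = q c xs t" unfolding q_def f_def ..
    also have "\<dots> \<le> Uh st c" using Uh_bounds(1)[OF w c(1) t xs] unfolding st_def .
    finally show "topk n k f \<le> x" using c by simp
  qed
  obtain c where c: "c \<le> m0" "k \<le> kg c" "real (kg c) \<le> (1 + eta) * real k" using kg_grid[OF k] by blast
  have e: "0 < eta" "eta \<le> 1/8" using eta_pos by auto
  have tk0: "0 \<le> topk n k f" by (rule topk_nonneg[OF k(2) fnn])
  have "Uk st k \<le> Uh st c" unfolding U using fC c by (intro Min_le) (auto simp: C_def)
  also have "\<dots> \<le> (1 + 2 * eta) * (q c xs t + real E) + real E" using Uh_bounds(2)[OF w c(1) t xs] unfolding st_def .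
  also have "q c xs t \<le> (1 + eta) * topk n k f"
  proof -
    have "q c xs t \<le> real (kg c) / real k * topk n k f"
      unfolding q_def f_def by (rule topk_ratio'[OF k(1) c(2) kg_le])
    also have "\<dots> \<le> (1 + eta) * topk n k f"
    proof (rule mult_right_mono[OF _ tk0])
      show "real (kg c) / real k \<le> 1 + eta" using c(3) k by (simp add: divide_le_eq mult.commute)
    qed
    finally show ?thesis .
  qed
  then have "(1 + 2 * eta) * (q c xs t + real E) + real E \<le> (1 + 2 * eta) * ((1 + eta) * topk n k f + real E) + real E"
    using e by (intro add_right_mono mult_left_mono) auto
  also have "\<dots> \<le> (1 + zeta) * topk n k f + 3 * real E"
  proof -
    have a1: "(1 + 2 * eta) * (1 + eta) = 1 + 3 * eta + 2 * (eta * eta)" by (simp add: algebra_simps)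
    have a2: "eta * eta \<le> eta * (1/8)" using e by (intro mult_left_mono) auto
    have a3: "zeta = 4 * eta" unfolding eta_def by simp
    have a: "(1 + 2 * eta) * (1 + eta) \<le> 1 + zeta" using a1 a2 a3 e by linarith
    have b1: "(2 * eta) * real E \<le> 1 * real E" by (rule mult_right_mono) (use e in auto)
    have b2: "(1 + 2 * eta) * real E = real E + (2 * eta) * real E" by (simp add: algebra_simps)
    have b: "(1 + 2 * eta) * real E + real E \<le> 3 * real E" using b1 b2 by linarith
    have "(1 + 2 * eta) * ((1 + eta) * topk n k f + real E) + real E = ((1 + 2 * eta) * (1 + eta)) * topk n k f + ((1 + 2 * eta) * real E + real E)"
      by (simp add: algebra_simps)
    also have "\<dots> \<le> (1 + zeta) * topk n k f + 3 * real E"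
      using a b tk0 by (intro add_mono mult_right_mono) auto
    finally show ?thesis .
  qed
  finally show ?thesis using lb unfolding f_def by simp
qed

lemma accurate_good:
  assumes w: "w \<in> Good" and xs: "valid_stream n T xs" and al: "3 * real E \<le> alpha"
  shows "accurate_output n T zeta alpha xs (Phi (sv xs w))"
  unfolding accurate_output_def
proof (intro ballI allI impI)
  fix t L assume t: "t \<in> {1..T}" and N: "mon_sym_norm n L"
  define st where "st = (\<lambda>i. sv xs w i \<le> t)"
  define f where "f = freq xs t"
  have nrm: "is_norm_on n L" using N by (simp add: mon_sym_norm_def)
  have fr: "f \<in> rvec n" unfolding f_def by (rule freq_rvec[OF xs])
  have fnn: "\<forall>i<n. 0 \<le> f i" unfolding f_def by (simp add: freq_nonneg)
  have sa: "L f \<le> Sup (L ` Vset n (Uk st)) \<and> Sup (L ` Vset n (Uk st)) \<le> (1 + zeta) * L f + (3 * real E) * L e1"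
  proof (rule sup_accuracy[OF N n1 fr fnn])
    show "0 \<le> zeta" using z0 by simp
    show "0 \<le> 3 * real E" by simp
    fix k assume "1 \<le> k" "k \<le> n"
    then show "topk n k f \<le> Uk st k \<and> Uk st k \<le> (1 + zeta) * topk n k f + 3 * real E"
      using Uk_bounds[OF w _ _ xs] t unfolding st_def f_def by auto
  qed
  have out: "Phi (sv xs w) t L = Sup (L ` Vset n (Uk st))" unfolding Phi_def st_def ..
  have Lf: "0 \<le> L f" by (rule norm_nonneg[OF nrm fr])
  have Le: "0 \<le> L e1" by (rule norm_nonneg[OF nrm e1_rvec[OF n1]])
  have "0 \<le> 3 * real E" by simp
  then have "0 \<le> alpha" using al by linarith
  have "L f * 1 \<le> L f * (1 + zeta)" using Lf z0 by (intro mult_left_mono) auto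
  then have "L f / (1 + zeta) \<le> L f" using Lf z0 by (simp add: divide_le_eq)
  moreover have "0 \<le> alpha * L e1" using \<open>0 \<le> alpha\<close> Le by simp
  moreover have "(3 * real E) * L e1 \<le> alpha * L e1" using al Le by (rule mult_right_mono)
  ultimately show "L (freq xs t) / (1 + zeta) - alpha * L e1 \<le> Phi (sv xs w) t L \<and>
       Phi (sv xs w) t L \<le> (1 + zeta) * L (freq xs t) + alpha * L e1"
    using sa unfolding out f_def by linarith
qed

end


lemma geom_tail:
  assumes p: "0 < p" "p \<le> 1"
  shows "measure (geometric_pmf p) {m. k \<le> m} = (1 - p) ^ k"
proof (induction k)
  case 0
  then show ?case by simp
next
  case (Suc k)
  have u: "{m. k \<le> m} = {k} \<union> {m. Suc k \<le> m}" by auto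
  have "measure (geometric_pmf p) {m. k \<le> m} = measure (geometric_pmf p) {k} + measure (geometric_pmf p) {m. Suc k \<le> m}"
    unfolding u by (rule measure_pmf.finite_measure_Union) auto
  also have "measure (geometric_pmf p) {k} = (1 - p) ^ k * p" using p by (simp add: measure_pmf_single)
  finally have "measure (geometric_pmf p) {m. Suc k \<le> m} = (1 - p) ^ k - (1 - p) ^ k * p" using Suc by simp
  also have "\<dots> = (1 - p) ^ Suc k" by (simp add: algebra_simps)
  finally show ?case .
qed

context mech begin

lemma coord_prob:
  assumes x: "x \<in> Dom"
  shows "measure W {w. k \<le> w x} = (1 - pp) ^ k"
proof -
  have "measure W {w. k \<le> w x} = measure (map_pmf (\<lambda>w. w x) W) {m. k \<le> m}" by (simp add: vimage_def)
  also have "map_pmf (\<lambda>w. w x) W = geometric_pmf pp" unfolding W_def using Pi_pmf_component[OF finite_Dom, of x 0 "\<lambda>_. geometric_pmf pp"] x by simp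
  also have "measure (geometric_pmf pp) {m. k \<le> m} = (1 - pp) ^ k"
    using pp_range by (intro geom_tail) auto
  finally show ?thesis .
qed

lemma good_prob: "2/3 \<le> measure W Good"
proof -
  define Bad where "Bad = (\<Union>x\<in>Dom. {w. Suc E \<le> w x})"
  have GB: "Good = UNIV - Bad" unfolding Good_def Bad_def by (auto simp: not_less_eq_eq)
  have "measure W Bad \<le> (\<Sum>x\<in>Dom. measure W {w. Suc E \<le> w x})"
    unfolding Bad_def by (rule measure_pmf.finite_measure_subadditive_finite[OF finite_Dom]) auto
  also have "\<dots> = (\<Sum>x\<in>Dom. (1 - pp) ^ Suc E)" by (intro sum.cong refl coord_prob)
  also have "\<dots> = real (card Dom) * exp (- epsp) ^ Suc E" using pp_range(3) by simp
  also have "exp (- epsp) ^ Suc E = exp (real (Suc E) * (- epsp))" by (rule exp_of_nat_mult[symmetric])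
  also have "\<dots> \<le> exp (- ln (3 * real (card Dom)))"
  proof -
    define X where "X = ln (3 * real (card Dom)) / epsp"
    have cD: "1 \<le> card Dom" unfolding card_Dom using card_Idx_pos by simp
    have X0: "0 \<le> X" unfolding X_def using cD epsp_pos by simp
    have "X < real_of_int \<lfloor>X\<rfloor> + 1" by linarith
    also have "real_of_int \<lfloor>X\<rfloor> = real E" unfolding E_def X_def[symmetric] using X0 by simp
    finally have "X \<le> real (Suc E)" by simp
    then have "ln (3 * real (card Dom)) \<le> real (Suc E) * epsp" unfolding X_def using epsp_pos by (simp add: divide_le_eq)
    then show ?thesis by simp
  qed
  also have "exp (- ln (3 * real (card Dom))) = 1 / (3 * real (card Dom))"
  proof -
    have "0 < card Dom" unfolding card_Dom using card_Idx_pos by simp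
    then have pos: "0 < 3 * real (card Dom)" by simp
    have "exp (- ln (3 * real (card Dom))) = inverse (exp (ln (3 * real (card Dom))))" by (rule exp_minus)
    also have "\<dots> = 1 / (3 * real (card Dom))" using pos by (simp add: inverse_eq_divide)
    finally show ?thesis .
  qed
  finally have "measure W Bad \<le> real (card Dom) * (1 / (3 * real (card Dom)))"
    by (simp add: mult_left_mono)
  also have "\<dots> = 1/3"
  proof -
    have "0 < card Dom" unfolding card_Dom using card_Idx_pos by simp
    then show ?thesis by simp
  qed
  finally have b: "measure W Bad \<le> 1/3" .
  have "measure W Good = 1 - measure W Bad" unfolding GB
    using measure_pmf.prob_compl[of Bad W] by simp
  then show ?thesis using b by simp
qed

lemma prob_accurate:
  assumes xs: "valid_stream n T xs" and al: "3 * real E \<le> alpha"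
  shows "2/3 \<le> measure_pmf.prob (M xs) {out. accurate_output n T zeta alpha xs out}"
proof -
  have "measure_pmf.prob (M xs) {out. accurate_output n T zeta alpha xs out}
     = measure W {w. accurate_output n T zeta alpha xs (Phi (sv xs w))}" unfolding M_def by (simp add: vimage_def)
  also have "measure W Good \<le> \<dots>"
    using accurate_good[OF _ xs al] by (intro measure_pmf.finite_measure_mono) (auto simp: Good_def)
  finally show ?thesis using good_prob by simp
qed

end


context mech begin

definition "Lam = ln (L0 + 2) + ln (1 / eps + 2) + ln (1 / zeta + 2)"

lemma ln3_ge1: "1 \<le> ln (3::real)"
proof -
  have "exp 1 \<le> (3::real)" using exp_le by simp
  then show ?thesis by (metis exp_gt_zero ln_exp ln_le_cancel_iff zero_less_numeral)
qed

lemma Lam_ge1: "1 \<le> Lam"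
proof -
  have "ln 3 \<le> ln (L0 + 2)" using L0_ge1 by simp
  then have a: "1 \<le> ln (L0 + 2)" using ln3_ge1 by simp
  have b: "0 \<le> ln (1 / eps + 2)" using eps by simp
  have c: "0 \<le> ln (1 / zeta + 2)" using z0 by simp
  show ?thesis unfolding Lam_def using a b c by linarith
qed

lemma m0_bound: "real m0 + 1 \<le> 10 * L0 / zeta"
proof -
  have y0: "0 \<le> 8 * L0 / zeta" using L0_ge1 z0 by simp
  have "real m0 = real_of_int \<lceil>8 * L0 / zeta\<rceil>" unfolding m0_def using y0 by simp
  also have "\<dots> < 8 * L0 / zeta + 1" by linarith
  finally have a: "real m0 < 8 * L0 / zeta + 1" .
  have "L0 \<le> L0 / zeta" using L0_ge1 z0 z1 by (simp add: le_divide_eq mult_le_cancel_left1)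
  then have "1 \<le> L0 / zeta" using L0_ge1 by simp
  moreover have "10 * L0 / zeta = 8 * L0 / zeta + 2 * (L0 / zeta)" by (simp add: field_simps)
  ultimately show ?thesis using a by linarith
qed

lemma Idx_bound: "real (card Idx) \<le> 100 * L0 ^ 2 / zeta ^ 2"
proof -
  have "real (card Idx) = (real m0 + 1) ^ 2" unfolding card_Idx by (simp add: power2_eq_square algebra_simps)
  also have "\<dots> \<le> (10 * L0 / zeta) ^ 2" by (rule power_mono[OF m0_bound]) simp
  also have "\<dots> = 100 * L0 ^ 2 / zeta ^ 2" by (simp add: power_divide power_mult_distrib)
  finally show ?thesis .
qed

lemma lnDom_bound: "ln (3 * real (card Dom)) \<le> 106 * L0 * Lam"
proof -
  have cI: "0 < real (card Idx)" using card_Idx_pos by simp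
  have e1: "3 * real (card Dom) = 3 * real (card Idx) * (real T + 1)" by (simp add: card_Dom algebra_simps)
  have e2: "ln (3 * real (card Idx) * (real T + 1)) = ln (3 * real (card Idx)) + ln (real T + 1)"
    by (rule ln_mult_pos) (use cI in auto)
  have e3: "ln (3 * real (card Idx)) = ln 3 + ln (real (card Idx))" by (rule ln_mult_pos) (use cI in auto)
  have "ln (3 * real (card Dom)) = ln 3 + ln (real (card Idx)) + ln (real T + 1)"
    unfolding e1 e2 e3 ..
  also have "ln (real (card Idx)) \<le> ln (100 * L0 ^ 2 / zeta ^ 2)" using cI Idx_bound by simp
  also have "ln (100 * L0 ^ 2 / zeta ^ 2) = ln 100 + 2 * ln L0 + 2 * ln (1 / zeta)"
    using L0_ge1 z0 by (simp add: ln_mult ln_div ln_realpow)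
  also have "ln (real T + 1) \<le> L0"
  proof -
    have "real T + 1 \<le> real n * real T + 2" using n1 by (smt (verit) mult_le_cancel_right1 of_nat_0_le_iff of_nat_1 of_nat_mono)
    then show ?thesis unfolding L0_def by simp
  qed
  finally have s: "ln (3 * real (card Dom)) \<le> ln 3 + (ln 100 + 2 * ln L0 + 2 * ln (1 / zeta)) + L0" by simp
  have l3: "ln (3::real) \<le> 2" using ln_le_minus_one[of 3] by simp
  have l100: "ln (100::real) \<le> 99" using ln_le_minus_one[of 100] by simp
  have lL: "ln L0 \<le> Lam"
  proof -
    have "ln L0 \<le> ln (L0 + 2)" using L0_ge1 by simp
    moreover have "0 \<le> ln (1 / eps + 2)" "0 \<le> ln (1 / zeta + 2)" using eps z0 by auto
    ultimately show ?thesis unfolding Lam_def by linarith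
  qed
  have lz: "ln (1 / zeta) \<le> Lam"
  proof -
    have "ln (1 / zeta) \<le> ln (1 / zeta + 2)" using z0 by (subst ln_le_cancel_iff) (auto simp: add_pos_pos)
    moreover have "0 \<le> ln (1 / eps + 2)" "1 \<le> ln (L0 + 2)"
      using eps L0_ge1 ln3_ge1 by (auto intro: order_trans[of _ "ln 3"])
    ultimately show ?thesis unfolding Lam_def by linarith
  qed
  have "ln (3 * real (card Dom)) \<le> 101 + 4 * Lam + L0" using s l3 l100 lL lz by linarith
  also have "\<dots> \<le> 106 * L0 * Lam"
  proof -
    have "1 * 1 \<le> L0 * Lam" using L0_ge1 Lam_ge1 by (intro mult_mono) auto
    moreover have "Lam \<le> L0 * Lam" using L0_ge1 Lam_ge1 by (simp add: mult_le_cancel_right1)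
    moreover have "L0 \<le> L0 * Lam" using L0_ge1 Lam_ge1 by (simp add: mult_le_cancel_left1)
    ultimately show ?thesis by linarith
  qed
  finally show ?thesis .
qed

lemma E_bound: "3 * real E \<le> 3033720000 * L0 ^ 6 / (eps ^ 2 * zeta ^ 5) * Lam ^ 2"
proof (cases "E = 0")
  case True
  have "0 \<le> 3033720000 * L0 ^ 6 / (eps ^ 2 * zeta ^ 5) * Lam ^ 2" using L0_ge1 eps z0 by simp
  then show ?thesis using True by simp
next
  case False
  define X where "X = ln (3 * real (card Dom)) / epsp"
  have cD: "1 \<le> card Dom" unfolding card_Dom using card_Idx_pos by simp
  have X0: "0 \<le> X" unfolding X_def using cD epsp_pos by simp
  have EX: "real E \<le> X" unfolding E_def X_def[symmetric] using X0 by linarith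
  then have X1: "1 \<le> X" using False by simp
  have "real E \<le> X" by (rule EX)
  also have "X \<le> X ^ 2" using X1 by (simp add: power2_eq_square)
  finally have EX2: "real E \<le> X ^ 2" .
  define Y where "Y = 31800 * L0 ^ 3 * Lam / (zeta ^ 2 * eps)"
  have XY: "X \<le> Y"
  proof -
    have "X = ln (3 * real (card Dom)) * (3 * real (card Idx)) / eps"
      unfolding X_def epsp_def using eps card_Idx_pos by (simp add: field_simps)
    also have "\<dots> \<le> (106 * L0 * Lam) * (3 * (100 * L0 ^ 2 / zeta ^ 2)) / eps"
    proof -
      have m: "ln (3 * real (card Dom)) * (3 * real (card Idx)) \<le> (106 * L0 * Lam) * (3 * (100 * L0 ^ 2 / zeta ^ 2))"
      proof (rule mult_mono)
        show "ln (3 * real (card Dom)) \<le> 106 * L0 * Lam" by (rule lnDom_bound)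
        show "3 * real (card Idx) \<le> 3 * (100 * L0 ^ 2 / zeta ^ 2)" using Idx_bound by simp
        show "0 \<le> 106 * L0 * Lam" using L0_ge1 Lam_ge1 by simp
        show "0 \<le> 3 * real (card Idx)" by simp
      qed
      show ?thesis by (rule divide_right_mono[OF m]) (use eps in simp)
    qed
    also have "\<dots> = Y" unfolding Y_def using z0 eps by (simp add: field_simps power2_eq_square power3_eq_cube)
    finally show ?thesis .
  qed
  have "X ^ 2 \<le> Y ^ 2" by (rule power_mono[OF XY X0])
  also have "Y ^ 2 = 31800 ^ 2 * L0 ^ 6 * Lam ^ 2 / (zeta ^ 4 * eps ^ 2)"
    unfolding Y_def by (simp add: power_divide power_mult_distrib power_mult[symmetric])
  also have "\<dots> \<le> 31800 ^ 2 * L0 ^ 6 * Lam ^ 2 / (zeta ^ 5 * eps ^ 2)"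
  proof (rule divide_left_mono)
    have "zeta ^ 5 \<le> zeta ^ 4" using z0 z1 by (simp add: power_decreasing)
    then show "zeta ^ 5 * eps ^ 2 \<le> zeta ^ 4 * eps ^ 2" using eps by (simp add: mult_right_mono)
    show "0 \<le> 31800 ^ 2 * L0 ^ 6 * Lam ^ 2" using L0_ge1 by simp
    show "0 < zeta ^ 4 * eps ^ 2 * (zeta ^ 5 * eps ^ 2)" using z0 eps by simp
  qed
  finally have "X ^ 2 \<le> 31800 ^ 2 * L0 ^ 6 * Lam ^ 2 / (zeta ^ 5 * eps ^ 2)" .
  then have "3 * real E \<le> 3 * (31800 ^ 2 * L0 ^ 6 * Lam ^ 2 / (zeta ^ 5 * eps ^ 2))" using EX2 by simp
  also have "\<dots> = 3033720000 * L0 ^ 6 / (eps ^ 2 * zeta ^ 5) * Lam ^ 2" by (simp add: field_simps)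
  finally show ?thesis .
qed

end


theorem mainTheorem17:
  "\<exists>C k::nat. C > 0 \<and>
    (\<forall>(n::nat) (T::nat) (\<epsilon>::real) (\<zeta>::real).
       n \<ge> 1 \<and> T \<ge> 1 \<and> \<epsilon> > 0 \<and> 0 < \<zeta> \<and> \<zeta> \<le> 1/2 \<longrightarrow>
       (\<exists>M::mechanism.
          continual n T M \<and> event_level_dp n T \<epsilon> M \<and>
          (let \<alpha> = C * ln (real n * real T + 2) ^ 6 / (\<epsilon>^2 * \<zeta>^5)
                     * (ln (ln (real n * real T + 2) + 2) + ln (1/\<epsilon> + 2) + ln (1/\<zeta> + 2)) ^ k
           in \<forall>xs. valid_stream n T xs \<longrightarrow>
                measure_pmf.prob (M xs) {out. accurate_output n T \<zeta> \<alpha> xs out} \<ge> 2/3)))"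
proof (rule exI[of _ 3033720000], rule exI[of _ 2], intro conjI allI impI)
  show "(0::real) < 3033720000" by simp
  fix n T :: nat and \<epsilon> \<zeta> :: real
  assume a: "n \<ge> 1 \<and> T \<ge> 1 \<and> \<epsilon> > 0 \<and> 0 < \<zeta> \<and> \<zeta> \<le> 1/2"
  interpret m: mech n T \<epsilon> \<zeta> by unfold_locales (use a in auto)
  show "\<exists>M::mechanism.
          continual n T M \<and> event_level_dp n T \<epsilon> M \<and>
          (let \<alpha> = 3033720000 * ln (real n * real T + 2) ^ 6 / (\<epsilon>^2 * \<zeta>^5)
                     * (ln (ln (real n * real T + 2) + 2) + ln (1/\<epsilon> + 2) + ln (1/\<zeta> + 2)) ^ 2
           in \<forall>xs. valid_stream n T xs \<longrightarrow>
                measure_pmf.prob (M xs) {out. accurate_output n T \<zeta> \<alpha> xs out} \<ge> 2/3)"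
  proof (intro exI[of _ m.M] conjI)
    show "continual n T m.M" by (rule m.continual_M)
    show "event_level_dp n T \<epsilon> m.M" by (rule m.dp_M)
    have al: "3 * real m.E \<le> 3033720000 * ln (real n * real T + 2) ^ 6 / (\<epsilon>^2 * \<zeta>^5)
                     * (ln (ln (real n * real T + 2) + 2) + ln (1/\<epsilon> + 2) + ln (1/\<zeta> + 2)) ^ 2"
      using m.E_bound unfolding m.L0_def m.Lam_def .
    show "let \<alpha> = 3033720000 * ln (real n * real T + 2) ^ 6 / (\<epsilon>^2 * \<zeta>^5)
                     * (ln (ln (real n * real T + 2) + 2) + ln (1/\<epsilon> + 2) + ln (1/\<zeta> + 2)) ^ 2
           in \<forall>xs. valid_stream n T xs \<longrightarrow>
                measure_pmf.prob (m.M xs) {out. accurate_output n T \<zeta> \<alpha> xs out} \<ge> 2/3"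
      unfolding Let_def using m.prob_accurate[OF _ al] by blast
  qed
qed


end
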